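(* Let $T$ be a nonabelian finite simple group and let $A,B,C$ be pairwise distinct proper subgroups of $T$ forming a strong multiple factorisation, i.e. $T=A(B\cap C)=B(C\cap A)=C(A\cap B)$. Let $M=T^3$, $G=T\wr C_3=M\rtimes C_3$, where $C_3$ is generated by the cyclic coordinate shift $(t_1,t_2,t_3)\mapsto(t_2,t_3,t_1)$, and let $K_1=A\times B\times C$, $K_2=B\times C\times A$, $K_3=C\times A\times B$. Then $K_1\cap K_2\cap K_3=(A\cap B\cap C)^3$ is normalised by $C_3$; $G$ acts transitively on the coset space $\Omega$ of $H=(K_1\cap K_2\cap K_3)\rtimes C_3$, with $M$ a transitive minimal normal subgroup; and for $\omega=H$: (a) $\{K_1,K_2,K_3\}$ is a Cartesian system of subgroups in $M$ with respect to $\omega$ which is not $M$-normal and has $|\mathcal F_i|=3$; (b) $\{(A\cap B\cap C)\times T\times T,\ T\times(A\cap B\cap C)\times T,\ T\times T\times(A\cap B\cap C)\}$ is also a Cartesian system of subgroups in $M$ with respect to $\omega$, and it is $M$-normal.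
   Context: For $G$ innately transitive on $\Omega$ (i.e. with a transitive minimal normal subgroup, a plinth) with plinth $M$ and $\omega\in\Omega$, a Cartesian system of subgroups in $M$ with respect to $\omega$ is a $G_\omega$-conjugation-invariant set $\{K_1,\ldots,K_\ell\}$ of subgroups of $M$ with $\bigcap_i K_i=M_\omega$ and $K_i\bigl(\bigcap_{j\ne i}K_j\bigr)=M$ for all $i$. It is $M$-normal if there are normal subgroups $M_1,\ldots,M_\ell$ of $M$ with $M=M_1\times\cdots\times M_\ell$ and $K_i=(M_i\cap M_\omega)\times\prod_{j\ne i}M_j$ for all $i$. For $M=T_1\times\cdots\times T_k$ with simple factors $T_i$ and projections $\sigma_i:M\to T_i$, $\mathcal F_i=\{\sigma_i(K_j):\sigma_i(K_j)\ne T_i\}$. *)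

theory Defs
  imports "HOL-Algebra.Algebra"
begin

text \<open>Elements of M = T^3 are triples (t1,t2,t3) (i.e. t1 x (t2 x t3) in HOL);
  elements of G are pairs (m, i) with m in T^3 and i in {0,1,2} standing for sigma^i,
  where sigma is the cyclic coordinate shift.\<close>

definition shift3 :: "'a \<times> 'a \<times> 'a \<Rightarrow> 'a \<times> 'a \<times> 'a" where
  "shift3 m = (case m of (t1, t2, t3) \<Rightarrow> (t2, t3, t1))"

definition mult3 :: "('a, 'b) monoid_scheme \<Rightarrow> 'a \<times> 'a \<times> 'a \<Rightarrow> 'a \<times> 'a \<times> 'a \<Rightarrow> 'a \<times> 'a \<times> 'a" where
  "mult3 T m n = (case m of (a, b, c) \<Rightarrow> case n of (a', b', c') \<Rightarrow>
      (a \<otimes>\<^bsub>T\<^esub> a', b \<otimes>\<^bsub>T\<^esub> b', c \<otimes>\<^bsub>T\<^esub> c'))"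

definition wr3 :: "('a, 'b) monoid_scheme \<Rightarrow> (('a \<times> 'a \<times> 'a) \<times> nat) monoid" where
  "wr3 T = \<lparr> carrier = (carrier T \<times> carrier T \<times> carrier T) \<times> {0, 1, 2},
      monoid.mult = (\<lambda>(m, i) (n, j). (mult3 T m ((shift3 ^^ i) n), (i + j) mod 3)),
      one = ((\<one>\<^bsub>T\<^esub>, \<one>\<^bsub>T\<^esub>, \<one>\<^bsub>T\<^esub>), 0) \<rparr>"

definition emb3 :: "('a \<times> 'a \<times> 'a) set \<Rightarrow> (('a \<times> 'a \<times> 'a) \<times> nat) set" where
  "emb3 Z = (\<lambda>m. (m, 0)) ` Z"

definition C3 :: "('a, 'b) monoid_scheme \<Rightarrow> (('a \<times> 'a \<times> 'a) \<times> nat) set" where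
  "C3 T = {((\<one>\<^bsub>T\<^esub>, \<one>\<^bsub>T\<^esub>, \<one>\<^bsub>T\<^esub>), i) | i. i < 3}"

definition proj3 :: "nat \<Rightarrow> 'a \<times> 'a \<times> 'a \<Rightarrow> 'a" where
  "proj3 i m = (case m of (a, b, c) \<Rightarrow> if i = 0 then a else if i = 1 then b else c)"

definition Fset :: "('a, 'b) monoid_scheme \<Rightarrow> (nat \<Rightarrow> ('a \<times> 'a \<times> 'a) set) \<Rightarrow> nat \<Rightarrow> nat \<Rightarrow> 'a set set" where
  "Fset T K l i = {proj3 i ` K j | j. j < l \<and> proj3 i ` K j \<noteq> carrier T}"

definition minimal_normal :: "('g, 'b) monoid_scheme \<Rightarrow> 'g set \<Rightarrow> bool" where
  "minimal_normal G N \<longleftrightarrow> N \<lhd> G \<and> N \<noteq> {\<one>\<^bsub>G\<^esub>} \<and>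
     (\<forall>L. L \<lhd> G \<and> L \<subseteq> N \<longrightarrow> L = {\<one>\<^bsub>G\<^esub>} \<or> L = N)"

text \<open>Cartesian system of subgroups K_0,...,K_(l-1) of M (a subgroup of G), where
  Gw is the point stabiliser G_omega and Mw = M_omega.\<close>

definition cartesian_system ::
  "('g, 'b) monoid_scheme \<Rightarrow> 'g set \<Rightarrow> 'g set \<Rightarrow> 'g set \<Rightarrow> nat \<Rightarrow> (nat \<Rightarrow> 'g set) \<Rightarrow> bool" where
  "cartesian_system G M Gw Mw l K \<longleftrightarrow>
     (\<forall>i<l. subgroup (K i) G \<and> K i \<subseteq> M) \<and>
     (\<forall>g\<in>Gw. (\<lambda>Z. (g <#\<^bsub>G\<^esub> Z) #>\<^bsub>G\<^esub> inv\<^bsub>G\<^esub> g) ` (K ` {..<l}) = K ` {..<l}) \<and>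
     M \<inter> (\<Inter>i\<in>{..<l}. K i) = Mw \<and>
     (\<forall>i<l. K i <#>\<^bsub>G\<^esub> (M \<inter> (\<Inter>j\<in>{..<l} - {i}. K j)) = M)"

text \<open>M-normal: M is the internal direct product of normal subgroups M_0,...,M_(l-1) and
  K_i = (M_i \<inter> M_omega) x prod_(j \<noteq> i) M_j (internal products, realised as generated subgroups).\<close>

definition M_normal ::
  "('g, 'b) monoid_scheme \<Rightarrow> 'g set \<Rightarrow> 'g set \<Rightarrow> nat \<Rightarrow> (nat \<Rightarrow> 'g set) \<Rightarrow> bool" where
  "M_normal G M Mw l K \<longleftrightarrow> (\<exists>Ms :: nat \<Rightarrow> 'g set.
     (\<forall>i<l. Ms i \<lhd> G\<lparr>carrier := M\<rparr>) \<and>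
     generate G (\<Union>i\<in>{..<l}. Ms i) = M \<and>
     (\<forall>i<l. Ms i \<inter> generate G (\<Union>j\<in>{..<l} - {i}. Ms j) = {\<one>\<^bsub>G\<^esub>}) \<and>
     (\<forall>i<l. K i = (Ms i \<inter> Mw) <#>\<^bsub>G\<^esub> generate G (\<Union>j\<in>{..<l} - {i}. Ms j)))"


definition Mbase :: "('a, 'b) monoid_scheme \<Rightarrow> (('a \<times> 'a \<times> 'a) \<times> nat) set" where
  "Mbase T = emb3 (carrier T \<times> carrier T \<times> carrier T)"

text \<open>K_1 = A x B x C, K_2 = B x C x A, K_3 = C x A x B (indexed 0,1,2), as subsets of T^3.\<close>

definition Ktrip :: "'a set \<Rightarrow> 'a set \<Rightarrow> 'a set \<Rightarrow> nat \<Rightarrow> ('a \<times> 'a \<times> 'a) set" where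
  "Ktrip A B C i = (if i = 0 then A \<times> B \<times> C else if i = 1 then B \<times> C \<times> A else C \<times> A \<times> B)"

definition Ltrip :: "('a, 'b) monoid_scheme \<Rightarrow> 'a set \<Rightarrow> nat \<Rightarrow> ('a \<times> 'a \<times> 'a) set" where
  "Ltrip T D i = (if i = 0 then D \<times> carrier T \<times> carrier T
                  else if i = 1 then carrier T \<times> D \<times> carrier T
                  else carrier T \<times> carrier T \<times> D)"

definition Hsub :: "('a, 'b) monoid_scheme \<Rightarrow> 'a set \<Rightarrow> 'a set \<Rightarrow> 'a set \<Rightarrow> (('a \<times> 'a \<times> 'a) \<times> nat) set" where
  "Hsub T A B C = emb3 (Ktrip A B C 0 \<inter> Ktrip A B C 1 \<inter> Ktrip A B C 2) <#>\<^bsub>wr3 T\<^esub> C3 T"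

definition coset_space :: "('g, 'b) monoid_scheme \<Rightarrow> 'g set \<Rightarrow> 'g set set" where
  "coset_space G H = {g <#\<^bsub>G\<^esub> H | g. g \<in> carrier G}"

definition stab :: "('g, 'b) monoid_scheme \<Rightarrow> 'g set \<Rightarrow> 'g set" where
  "stab G w = {g \<in> carrier G. g <#\<^bsub>G\<^esub> w = w}"

definition transitive_on :: "('g, 'b) monoid_scheme \<Rightarrow> 'g set \<Rightarrow> 'g set set \<Rightarrow> bool" where
  "transitive_on G N \<Omega> \<longleftrightarrow> (\<forall>x\<in>\<Omega>. \<forall>y\<in>\<Omega>. \<exists>g\<in>N. g <#\<^bsub>G\<^esub> x = y)"

end

theory Submission
  imports Defs
begin

lemma shift3_simp[simp]: "shift3 (a,b,c) = (b,c,a)" by (simp add: shift3_def)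
lemma shift_pow_simps[simp]: "(shift3^^1) (a,b,c) = (b,c,a)" "(shift3^^2) (a,b,c) = (c,a,b)"
  by (simp_all add: numeral_2_eq_2)
lemma mult3_simp[simp]: "mult3 T (a,b,c) (a',b',c') = (a \<otimes>\<^bsub>T\<^esub> a', b \<otimes>\<^bsub>T\<^esub> b', c \<otimes>\<^bsub>T\<^esub> c')"
  by (simp add: mult3_def)
lemma wr3_carrier[simp]: "carrier (wr3 T) = (carrier T \<times> carrier T \<times> carrier T) \<times> {0,1,2}"
  by (simp add: wr3_def)
lemma wr3_mult[simp]: "(m,i) \<otimes>\<^bsub>wr3 T\<^esub> (n,j) = (mult3 T m ((shift3^^i) n), (i+j) mod 3)"
  by (simp add: wr3_def)
lemma wr3_one[simp]: "\<one>\<^bsub>wr3 T\<^esub> = ((\<one>\<^bsub>T\<^esub>,\<one>\<^bsub>T\<^esub>,\<one>\<^bsub>T\<^esub>),0)"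
  by (simp add: wr3_def)

lemma wr3_elem: assumes "x \<in> carrier (wr3 T)"
  obtains a b c where "x = ((a,b,c),0)" "a \<in> carrier T" "b \<in> carrier T" "c \<in> carrier T"
  | a b c where "x = ((a,b,c),1)" "a \<in> carrier T" "b \<in> carrier T" "c \<in> carrier T"
  | a b c where "x = ((a,b,c),2)" "a \<in> carrier T" "b \<in> carrier T" "c \<in> carrier T"
  using assms by (cases x) auto

lemma (in group) wr3_group: "group (wr3 G)"
proof (rule groupI)
  fix x y assume "x \<in> carrier (wr3 G)" "y \<in> carrier (wr3 G)"
  then show "x \<otimes>\<^bsub>wr3 G\<^esub> y \<in> carrier (wr3 G)"
    by (elim wr3_elem) auto
next
  show "\<one>\<^bsub>wr3 G\<^esub> \<in> carrier (wr3 G)" by simp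
next
  fix x y z assume "x \<in> carrier (wr3 G)" "y \<in> carrier (wr3 G)" "z \<in> carrier (wr3 G)"
  then show "x \<otimes>\<^bsub>wr3 G\<^esub> y \<otimes>\<^bsub>wr3 G\<^esub> z = x \<otimes>\<^bsub>wr3 G\<^esub> (y \<otimes>\<^bsub>wr3 G\<^esub> z)"
    by (elim wr3_elem) (auto simp: m_assoc)
next
  fix x assume "x \<in> carrier (wr3 G)"
  then show "\<one>\<^bsub>wr3 G\<^esub> \<otimes>\<^bsub>wr3 G\<^esub> x = x"
    by (elim wr3_elem) auto
next
  fix x assume "x \<in> carrier (wr3 G)"
  then show "\<exists>y\<in>carrier (wr3 G). y \<otimes>\<^bsub>wr3 G\<^esub> x = \<one>\<^bsub>wr3 G\<^esub>"
  proof (elim wr3_elem)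
    fix a b c assume h: "x = ((a,b,c),0)" "a \<in> carrier G" "b \<in> carrier G" "c \<in> carrier G"
    show ?thesis using h by (intro bexI[of _ "((inv a, inv b, inv c),0)"]) auto
  next
    fix a b c assume h: "x = ((a,b,c),1)" "a \<in> carrier G" "b \<in> carrier G" "c \<in> carrier G"
    show ?thesis using h by (intro bexI[of _ "((inv c, inv a, inv b),2)"]) auto
  next
    fix a b c assume h: "x = ((a,b,c),2)" "a \<in> carrier G" "b \<in> carrier G" "c \<in> carrier G"
    show ?thesis using h by (intro bexI[of _ "((inv b, inv c, inv a),1)"]) auto
  qed
qed


context group begin

lemma cancel1[simp]: "x \<in> carrier G \<Longrightarrow> y \<in> carrier G \<Longrightarrow> x \<otimes> (inv x \<otimes> y) = y"
  by (simp add: m_assoc[symmetric])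
lemma cancel2[simp]: "x \<in> carrier G \<Longrightarrow> y \<in> carrier G \<Longrightarrow> inv x \<otimes> (x \<otimes> y) = y"
  by (simp add: m_assoc[symmetric])

lemma wr3_inv0: "a \<in> carrier G \<Longrightarrow> b \<in> carrier G \<Longrightarrow> c \<in> carrier G \<Longrightarrow>
  inv\<^bsub>wr3 G\<^esub> ((a,b,c),0) = ((inv a, inv b, inv c),0)"
  by (rule group.inv_equality[OF wr3_group]) auto
lemma wr3_inv1: "a \<in> carrier G \<Longrightarrow> b \<in> carrier G \<Longrightarrow> c \<in> carrier G \<Longrightarrow>
  inv\<^bsub>wr3 G\<^esub> ((a,b,c),1) = ((inv c, inv a, inv b),2)"
  by (rule group.inv_equality[OF wr3_group]) auto
lemma wr3_inv2: "a \<in> carrier G \<Longrightarrow> b \<in> carrier G \<Longrightarrow> c \<in> carrier G \<Longrightarrow>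
  inv\<^bsub>wr3 G\<^esub> ((a,b,c),2) = ((inv b, inv c, inv a),1)"
  by (rule group.inv_equality[OF wr3_group]) auto

lemma wr3_inv1': "a \<in> carrier G \<Longrightarrow> b \<in> carrier G \<Longrightarrow> c \<in> carrier G \<Longrightarrow>
  inv\<^bsub>wr3 G\<^esub> ((a,b,c),Suc 0) = ((inv c, inv a, inv b),2)"
  using wr3_inv1 by simp

lemma wr3_snd_mult: "snd (x \<otimes>\<^bsub>wr3 G\<^esub> y) = (snd x + snd y) mod 3"
  by (cases x, cases y) simp

lemma wr3_snd_inv: "x \<in> carrier (wr3 G) \<Longrightarrow> snd (inv\<^bsub>wr3 G\<^esub> x) = (3 - snd x) mod 3"
  by (elim wr3_elem) (auto simp: wr3_inv0 wr3_inv1 wr3_inv1' wr3_inv2)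

lemma Mbase_alt: "Mbase G = {x \<in> carrier (wr3 G). snd x = 0}"
  by (auto simp: Mbase_def emb3_def)

lemma Mbase_normal: "Mbase G \<lhd> wr3 G"
proof -
  interpret W: group "wr3 G" by (rule wr3_group)
  have sub: "subgroup (Mbase G) (wr3 G)"
  proof (rule W.subgroupI)
    show "Mbase G \<subseteq> carrier (wr3 G)" by (auto simp: Mbase_alt)
    show "Mbase G \<noteq> {}" by (auto simp: Mbase_alt intro!: exI[of _ "\<one>\<^bsub>wr3 G\<^esub>"])
    fix a b assume ab: "a \<in> Mbase G" "b \<in> Mbase G"
    then have abc: "a \<in> carrier (wr3 G)" "b \<in> carrier (wr3 G)" unfolding Mbase_alt by blast+
    have "inv\<^bsub>wr3 G\<^esub> a \<in> carrier (wr3 G)" "a \<otimes>\<^bsub>wr3 G\<^esub> b \<in> carrier (wr3 G)"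
      using abc by (blast intro: W.inv_closed W.m_closed)+
    then show "inv\<^bsub>wr3 G\<^esub> a \<in> Mbase G" "a \<otimes>\<^bsub>wr3 G\<^esub> b \<in> Mbase G"
      using ab abc unfolding Mbase_alt by (auto simp: wr3_snd_inv wr3_snd_mult simp del: wr3_carrier)
  qed
  show ?thesis
  proof (subst W.normal_inv_iff, intro conjI sub ballI)
    fix x h assume x: "x \<in> carrier (wr3 G)" and h: "h \<in> Mbase G"
    have hc: "h \<in> carrier (wr3 G)" using h unfolding Mbase_alt by blast
    have "x \<otimes>\<^bsub>wr3 G\<^esub> h \<otimes>\<^bsub>wr3 G\<^esub> inv\<^bsub>wr3 G\<^esub> x \<in> carrier (wr3 G)"
      using x hc by (blast intro: W.inv_closed W.m_closed)
    moreover have "snd x = 0 \<or> snd x = 1 \<or> snd x = 2" using x by auto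
    ultimately show "x \<otimes>\<^bsub>wr3 G\<^esub> h \<otimes>\<^bsub>wr3 G\<^esub> inv\<^bsub>wr3 G\<^esub> x \<in> Mbase G"
      using x h unfolding Mbase_alt
      by (auto simp: wr3_snd_inv wr3_snd_mult simp del: wr3_carrier)
  qed
qed

lemma emb3_subgroup:
  assumes "subgroup X1 G" "subgroup X2 G" "subgroup X3 G"
  shows "subgroup (emb3 (X1 \<times> X2 \<times> X3)) (wr3 G)"
proof (rule group.subgroupI[OF wr3_group])
  show "emb3 (X1 \<times> X2 \<times> X3) \<subseteq> carrier (wr3 G)"
    using assms subgroup.subset by (fastforce simp: emb3_def)
  show "emb3 (X1 \<times> X2 \<times> X3) \<noteq> {}"
    using assms subgroup.one_closed by (fastforce simp: emb3_def)
  note Yc = subgroup.mem_carrier[OF assms(1)] subgroup.mem_carrier[OF assms(2)] subgroup.mem_carrier[OF assms(3)]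
  fix a b assume "a \<in> emb3 (X1 \<times> X2 \<times> X3)" "b \<in> emb3 (X1 \<times> X2 \<times> X3)"
  then show "inv\<^bsub>wr3 G\<^esub> a \<in> emb3 (X1 \<times> X2 \<times> X3)" "a \<otimes>\<^bsub>wr3 G\<^esub> b \<in> emb3 (X1 \<times> X2 \<times> X3)"
    using assms Yc by (auto simp: emb3_def wr3_inv0 subgroup.m_inv_closed subgroup.m_closed)
qed

lemma conj_gen: "(g <#\<^bsub>H\<^esub> Z) #>\<^bsub>H\<^esub> h = (\<lambda>z. g \<otimes>\<^bsub>H\<^esub> z \<otimes>\<^bsub>H\<^esub> h) ` Z"
  by (auto simp: l_coset_def r_coset_def)

lemma conj_emb3_0:
  assumes Y: "subgroup Y1 G" "subgroup Y2 G" "subgroup Y3 G" and d: "d1 \<in> Y1" "d2 \<in> Y2" "d3 \<in> Y3"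
  shows "(((d1,d2,d3),0) <#\<^bsub>wr3 G\<^esub> emb3 (Y1\<times>Y2\<times>Y3)) #>\<^bsub>wr3 G\<^esub> inv\<^bsub>wr3 G\<^esub> ((d1,d2,d3),0) = emb3 (Y1\<times>Y2\<times>Y3)"
proof -
  have dc: "d1 \<in> carrier G" "d2 \<in> carrier G" "d3 \<in> carrier G" using Y d subgroup.mem_carrier by metis+
  note Yc = subgroup.mem_carrier[OF Y(1)] subgroup.mem_carrier[OF Y(2)] subgroup.mem_carrier[OF Y(3)]
  note cl = subgroup.m_closed[OF Y(1)] subgroup.m_closed[OF Y(2)] subgroup.m_closed[OF Y(3)]
    subgroup.m_inv_closed[OF Y(1)] subgroup.m_inv_closed[OF Y(2)] subgroup.m_inv_closed[OF Y(3)]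
  show ?thesis
  proof (unfold conj_gen, intro equalityI subsetI)
    fix x assume "x \<in> (\<lambda>z. ((d1,d2,d3),0) \<otimes>\<^bsub>wr3 G\<^esub> z \<otimes>\<^bsub>wr3 G\<^esub> inv\<^bsub>wr3 G\<^esub> ((d1,d2,d3),0)) ` emb3 (Y1\<times>Y2\<times>Y3)"
    then obtain a b c where abc: "a \<in> Y1" "b \<in> Y2" "c \<in> Y3"
      and x: "x = ((d1,d2,d3),0) \<otimes>\<^bsub>wr3 G\<^esub> ((a,b,c),0) \<otimes>\<^bsub>wr3 G\<^esub> inv\<^bsub>wr3 G\<^esub> ((d1,d2,d3),0)"
      by (auto simp: emb3_def)
    show "x \<in> emb3 (Y1\<times>Y2\<times>Y3)" using abc d dc Yc cl unfolding x by (simp add: wr3_inv0 emb3_def)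
  next
    fix x assume "x \<in> emb3 (Y1\<times>Y2\<times>Y3)"
    then obtain a b c where abc: "a \<in> Y1" "b \<in> Y2" "c \<in> Y3" and x: "x = ((a,b,c),0)"
      by (auto simp: emb3_def)
    show "x \<in> (\<lambda>z. ((d1,d2,d3),0) \<otimes>\<^bsub>wr3 G\<^esub> z \<otimes>\<^bsub>wr3 G\<^esub> inv\<^bsub>wr3 G\<^esub> ((d1,d2,d3),0)) ` emb3 (Y1\<times>Y2\<times>Y3)"
      unfolding x emb3_def
      by (rule image_eqI[where x = "((inv d1 \<otimes> a \<otimes> d1, inv d2 \<otimes> b \<otimes> d2, inv d3 \<otimes> c \<otimes> d3),0)"])
         (use abc d dc Yc cl in \<open>simp_all add: wr3_inv0[OF dc] m_assoc\<close>)
  qed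
qed

lemma conj_emb3_1:
  assumes Y: "subgroup Y1 G" "subgroup Y2 G" "subgroup Y3 G" and d: "d1 \<in> Y1" "d2 \<in> Y2" "d3 \<in> Y3"
  shows "(((d1,d2,d3),1) <#\<^bsub>wr3 G\<^esub> emb3 (Y3\<times>Y1\<times>Y2)) #>\<^bsub>wr3 G\<^esub> inv\<^bsub>wr3 G\<^esub> ((d1,d2,d3),1) = emb3 (Y1\<times>Y2\<times>Y3)"
proof -
  have dc: "d1 \<in> carrier G" "d2 \<in> carrier G" "d3 \<in> carrier G" using Y d subgroup.mem_carrier by metis+
  note Yc = subgroup.mem_carrier[OF Y(1)] subgroup.mem_carrier[OF Y(2)] subgroup.mem_carrier[OF Y(3)]
  note cl = subgroup.m_closed[OF Y(1)] subgroup.m_closed[OF Y(2)] subgroup.m_closed[OF Y(3)]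
    subgroup.m_inv_closed[OF Y(1)] subgroup.m_inv_closed[OF Y(2)] subgroup.m_inv_closed[OF Y(3)]
  show ?thesis
  proof (unfold conj_gen, intro equalityI subsetI)
    fix x assume "x \<in> (\<lambda>z. ((d1,d2,d3),1) \<otimes>\<^bsub>wr3 G\<^esub> z \<otimes>\<^bsub>wr3 G\<^esub> inv\<^bsub>wr3 G\<^esub> ((d1,d2,d3),1)) ` emb3 (Y3\<times>Y1\<times>Y2)"
    then obtain a b c where abc: "a \<in> Y3" "b \<in> Y1" "c \<in> Y2"
      and x: "x = ((d1,d2,d3),1) \<otimes>\<^bsub>wr3 G\<^esub> ((a,b,c),0) \<otimes>\<^bsub>wr3 G\<^esub> inv\<^bsub>wr3 G\<^esub> ((d1,d2,d3),1)"
      by (auto simp: emb3_def)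
    show "x \<in> emb3 (Y1\<times>Y2\<times>Y3)" using abc d dc Yc cl unfolding x by (simp add: wr3_inv1 wr3_inv1' emb3_def)
  next
    fix x assume "x \<in> emb3 (Y1\<times>Y2\<times>Y3)"
    then obtain a b c where abc: "a \<in> Y1" "b \<in> Y2" "c \<in> Y3" and x: "x = ((a,b,c),0)"
      by (auto simp: emb3_def)
    show "x \<in> (\<lambda>z. ((d1,d2,d3),1) \<otimes>\<^bsub>wr3 G\<^esub> z \<otimes>\<^bsub>wr3 G\<^esub> inv\<^bsub>wr3 G\<^esub> ((d1,d2,d3),1)) ` emb3 (Y3\<times>Y1\<times>Y2)"
      unfolding x emb3_def
      by (rule image_eqI[where x = "((inv d3 \<otimes> c \<otimes> d3, inv d1 \<otimes> a \<otimes> d1, inv d2 \<otimes> b \<otimes> d2),0)"])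
         (use abc d dc Yc cl in \<open>simp_all add: wr3_inv1[OF dc] wr3_inv1'[OF dc] m_assoc\<close>)
  qed
qed

lemma conj_emb3_2:
  assumes Y: "subgroup Y1 G" "subgroup Y2 G" "subgroup Y3 G" and d: "d1 \<in> Y1" "d2 \<in> Y2" "d3 \<in> Y3"
  shows "(((d1,d2,d3),2) <#\<^bsub>wr3 G\<^esub> emb3 (Y2\<times>Y3\<times>Y1)) #>\<^bsub>wr3 G\<^esub> inv\<^bsub>wr3 G\<^esub> ((d1,d2,d3),2) = emb3 (Y1\<times>Y2\<times>Y3)"
proof -
  have dc: "d1 \<in> carrier G" "d2 \<in> carrier G" "d3 \<in> carrier G" using Y d subgroup.mem_carrier by metis+
  note Yc = subgroup.mem_carrier[OF Y(1)] subgroup.mem_carrier[OF Y(2)] subgroup.mem_carrier[OF Y(3)]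
  note cl = subgroup.m_closed[OF Y(1)] subgroup.m_closed[OF Y(2)] subgroup.m_closed[OF Y(3)]
    subgroup.m_inv_closed[OF Y(1)] subgroup.m_inv_closed[OF Y(2)] subgroup.m_inv_closed[OF Y(3)]
  show ?thesis
  proof (unfold conj_gen, intro equalityI subsetI)
    fix x assume "x \<in> (\<lambda>z. ((d1,d2,d3),2) \<otimes>\<^bsub>wr3 G\<^esub> z \<otimes>\<^bsub>wr3 G\<^esub> inv\<^bsub>wr3 G\<^esub> ((d1,d2,d3),2)) ` emb3 (Y2\<times>Y3\<times>Y1)"
    then obtain a b c where abc: "a \<in> Y2" "b \<in> Y3" "c \<in> Y1"
      and x: "x = ((d1,d2,d3),2) \<otimes>\<^bsub>wr3 G\<^esub> ((a,b,c),0) \<otimes>\<^bsub>wr3 G\<^esub> inv\<^bsub>wr3 G\<^esub> ((d1,d2,d3),2)"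
      by (auto simp: emb3_def)
    show "x \<in> emb3 (Y1\<times>Y2\<times>Y3)" using abc d dc Yc cl unfolding x by (simp add: wr3_inv2 emb3_def)
  next
    fix x assume "x \<in> emb3 (Y1\<times>Y2\<times>Y3)"
    then obtain a b c where abc: "a \<in> Y1" "b \<in> Y2" "c \<in> Y3" and x: "x = ((a,b,c),0)"
      by (auto simp: emb3_def)
    show "x \<in> (\<lambda>z. ((d1,d2,d3),2) \<otimes>\<^bsub>wr3 G\<^esub> z \<otimes>\<^bsub>wr3 G\<^esub> inv\<^bsub>wr3 G\<^esub> ((d1,d2,d3),2)) ` emb3 (Y2\<times>Y3\<times>Y1)"
      unfolding x emb3_def
      by (rule image_eqI[where x = "((inv d2 \<otimes> b \<otimes> d2, inv d3 \<otimes> c \<otimes> d3, inv d1 \<otimes> a \<otimes> d1),0)"])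
         (use abc d dc Yc cl in \<open>simp_all add: wr3_inv2[OF dc] m_assoc\<close>)
  qed
qed


lemma stab_subgroup: "subgroup H G \<Longrightarrow> stab G H = H"
proof -
  assume H: "subgroup H G"
  have Hc: "H \<subseteq> carrier G" using H subgroup.subset by blast
  show ?thesis
  proof (intro equalityI subsetI)
    fix g assume "g \<in> stab G H"
    then have g: "g \<in> carrier G" "g <# H = H" by (auto simp: stab_def)
    then show "g \<in> H" using lcos_self[OF g(1) H] by simp
  next
    fix g assume g: "g \<in> H"
    then have gc: "g \<in> carrier G" using Hc by blast
    have "g \<in> \<one> <# H" using lcos_mult_one[OF Hc] g by simp
    then have "\<one> <# H = g <# H" by (rule l_repr_independence[OF _ one_closed H])
    then show "g \<in> stab G H" using gc lcos_mult_one[OF Hc] by (simp add: stab_def)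
  qed
qed

lemma transitive_cosets: "subgroup H G \<Longrightarrow> transitive_on G (carrier G) (coset_space G H)"
proof -
  assume H: "subgroup H G"
  have Hc: "H \<subseteq> carrier G" using H subgroup.subset by blast
  show ?thesis unfolding transitive_on_def coset_space_def
  proof (clarify)
    fix g1 g2 assume g: "g1 \<in> carrier G" "g2 \<in> carrier G"
    show "\<exists>g\<in>carrier G. g <# (g1 <# H) = g2 <# H"
      by (rule bexI[of _ "g2 \<otimes> inv g1"]) (use g Hc in \<open>simp_all add: lcos_m_assoc m_assoc\<close>)
  qed
qed

lemma set_mult_carrier_r: "subgroup S G \<Longrightarrow> S <#> carrier G = carrier G"
proof -
  assume S: "subgroup S G"
  show ?thesis
  proof (intro equalityI subsetI)
    fix x assume "x \<in> S <#> carrier G"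
    then show "x \<in> carrier G" using S subgroup.mem_carrier by (fastforce simp: set_mult_def)
  next
    fix x assume "x \<in> carrier G"
    then show "x \<in> S <#> carrier G" unfolding set_mult_def
      using subgroup.one_closed[OF S] by (intro UN_I[of \<one>] UN_I[of x]) auto
  qed
qed

lemma set_mult_carrier_l: "subgroup S G \<Longrightarrow> carrier G <#> S = carrier G"
proof -
  assume S: "subgroup S G"
  show ?thesis
  proof (intro equalityI subsetI)
    fix x assume "x \<in> carrier G <#> S"
    then show "x \<in> carrier G" using S subgroup.mem_carrier by (fastforce simp: set_mult_def)
  next
    fix x assume "x \<in> carrier G"
    then show "x \<in> carrier G <#> S" unfolding set_mult_def
      using subgroup.one_closed[OF S] by (intro UN_I[of x] UN_I[of \<one>]) auto
  qed
qed

lemma set_mult_one_r: "S \<subseteq> carrier G \<Longrightarrow> S <#> {\<one>} = S"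
  unfolding set_mult_def by (auto simp: subsetD)
lemma set_mult_one_l: "S \<subseteq> carrier G \<Longrightarrow> {\<one>} <#> S = S"
  unfolding set_mult_def by (auto simp: subsetD)

lemma emb3_set_mult:
  "emb3 (X1\<times>X2\<times>X3) <#>\<^bsub>wr3 G\<^esub> emb3 (Y1\<times>Y2\<times>Y3) = emb3 ((X1<#>Y1)\<times>(X2<#>Y2)\<times>(X3<#>Y3))"
proof (intro equalityI subsetI)
  fix x assume "x \<in> emb3 (X1\<times>X2\<times>X3) <#>\<^bsub>wr3 G\<^esub> emb3 (Y1\<times>Y2\<times>Y3)"
  then obtain a1 a2 a3 b1 b2 b3 where ab: "a1 \<in> X1" "a2 \<in> X2" "a3 \<in> X3" "b1 \<in> Y1" "b2 \<in> Y2" "b3 \<in> Y3"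
    and x: "x = ((a1,a2,a3),0) \<otimes>\<^bsub>wr3 G\<^esub> ((b1,b2,b3),0)"
    unfolding set_mult_def emb3_def by blast
  have "a1 \<otimes> b1 \<in> X1 <#> Y1" "a2 \<otimes> b2 \<in> X2 <#> Y2" "a3 \<otimes> b3 \<in> X3 <#> Y3"
    using ab unfolding set_mult_def by blast+
  then show "x \<in> emb3 ((X1<#>Y1)\<times>(X2<#>Y2)\<times>(X3<#>Y3))"
    unfolding x emb3_def by simp
next
  fix x assume "x \<in> emb3 ((X1<#>Y1)\<times>(X2<#>Y2)\<times>(X3<#>Y3))"
  then obtain a1 a2 a3 b1 b2 b3 where ab: "a1 \<in> X1" "a2 \<in> X2" "a3 \<in> X3" "b1 \<in> Y1" "b2 \<in> Y2" "b3 \<in> Y3"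
    and x: "x = ((a1 \<otimes> b1, a2 \<otimes> b2, a3 \<otimes> b3),0)"
    unfolding set_mult_def emb3_def by blast
  show "x \<in> emb3 (X1\<times>X2\<times>X3) <#>\<^bsub>wr3 G\<^esub> emb3 (Y1\<times>Y2\<times>Y3)"
    unfolding set_mult_def emb3_def x
    by (rule UN_I[of "((a1,a2,a3),0)"], use ab in simp, rule UN_I[of "((b1,b2,b3),0)"]) (use ab in simp_all)
qed

lemma comm_lemma: "t \<in> carrier G \<Longrightarrow> y \<in> carrier G \<Longrightarrow> t \<otimes> y \<otimes> inv t \<otimes> inv y = \<one> \<Longrightarrow> t \<otimes> y = y \<otimes> t"
proof -
  assume c: "t \<in> carrier G" "y \<in> carrier G" and e: "t \<otimes> y \<otimes> inv t \<otimes> inv y = \<one>"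
  have "t \<otimes> y \<otimes> inv t = (t \<otimes> y \<otimes> inv t \<otimes> inv y) \<otimes> y" using c by (simp add: m_assoc)
  then have 1: "t \<otimes> y \<otimes> inv t = y" using e c by simp
  have "t \<otimes> y = (t \<otimes> y \<otimes> inv t) \<otimes> t" using c by (simp add: m_assoc)
  then show ?thesis using 1 by simp
qed

end

lemma (in simple_group) noncentral:
  assumes nonab: "\<not> comm_group G" and y: "y \<in> carrier G" "y \<noteq> \<one>"
  shows "\<exists>t\<in>carrier G. t \<otimes> y \<noteq> y \<otimes> t"
proof (rule ccontr)
  assume "\<not> ?thesis"
  then have cy: "\<And>t. t \<in> carrier G \<Longrightarrow> t \<otimes> y = y \<otimes> t" by blast
  define Z where "Z = {z \<in> carrier G. \<forall>t\<in>carrier G. t \<otimes> z = z \<otimes> t}"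
  have Zs: "subgroup Z G"
  proof (rule subgroupI)
    show "Z \<subseteq> carrier G" "Z \<noteq> {}" unfolding Z_def by auto
    fix a b assume a: "a \<in> Z" and b: "b \<in> Z"
    show "a \<otimes> b \<in> Z" unfolding Z_def
    proof (safe)
      have ac: "a \<in> carrier G" "b \<in> carrier G" using a b Z_def by auto
      then show "a \<otimes> b \<in> carrier G" by simp
      fix t assume t: "t \<in> carrier G"
      have at: "t \<otimes> a = a \<otimes> t" "t \<otimes> b = b \<otimes> t" using a b t Z_def by auto
      have "t \<otimes> (a \<otimes> b) = (t \<otimes> a) \<otimes> b" using ac t by (simp add: m_assoc)
      also have "\<dots> = a \<otimes> (t \<otimes> b)" using ac t at by (simp add: m_assoc)
      also have "\<dots> = (a \<otimes> b) \<otimes> t" using ac t at by (simp add: m_assoc)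
      finally show "t \<otimes> (a \<otimes> b) = a \<otimes> b \<otimes> t" .
    qed
    show "inv a \<in> Z" unfolding Z_def
    proof (safe)
      show "inv a \<in> carrier G" using a Z_def by auto
      fix t assume t: "t \<in> carrier G"
      have ac: "a \<in> carrier G" and at: "t \<otimes> a = a \<otimes> t" using a t Z_def by auto
      have "inv a \<otimes> (t \<otimes> a) \<otimes> inv a = inv a \<otimes> (a \<otimes> t) \<otimes> inv a" using at by simp
      then show "t \<otimes> inv a = inv a \<otimes> t" using ac t by (simp add: m_assoc)
    qed
  qed
  have "Z \<lhd> G"
  proof (subst normal_inv_iff, intro conjI Zs ballI)
    fix x h assume x: "x \<in> carrier G" and h: "h \<in> Z"
    then have "x \<otimes> h = h \<otimes> x" "h \<in> carrier G" unfolding Z_def by auto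
    then have "x \<otimes> h \<otimes> inv x = h" using x by (simp add: m_assoc)
    then show "x \<otimes> h \<otimes> inv x \<in> Z" using h by simp
  qed
  then have "Z = carrier G \<or> Z = {\<one>}" by (rule no_real_normal_subgroup)
  moreover have "y \<in> Z" using y cy unfolding Z_def by auto
  ultimately have "Z = carrier G" using y by auto
  then have "comm_group G"
    by (intro group_comm_groupI) (auto simp: Z_def)
  then show False using nonab by simp
qed


lemma (in simple_group) coord_normal:
  assumes NW: "subgroup N (wr3 G)" and NM: "N \<subseteq> Mbase G"
    and cj: "\<And>x h. x \<in> Mbase G \<Longrightarrow> h \<in> N \<Longrightarrow> x \<otimes>\<^bsub>wr3 G\<^esub> h \<otimes>\<^bsub>wr3 G\<^esub> inv\<^bsub>wr3 G\<^esub> x \<in> N"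
    and k: "k < 3"
  shows "{proj3 k m | m. (m,0) \<in> N} \<lhd> G"
proof -
  have Nel: "\<And>z. z \<in> N \<Longrightarrow> \<exists>a b c. z = ((a,b,c),0) \<and> a \<in> carrier G \<and> b \<in> carrier G \<and> c \<in> carrier G"
    using NM unfolding Mbase_def emb3_def by blast
  have Nel2: "\<And>a b c. ((a,b,c),0) \<in> N \<Longrightarrow> a \<in> carrier G \<and> b \<in> carrier G \<and> c \<in> carrier G"
    using NM unfolding Mbase_def emb3_def by blast
  have k3: "k = 0 \<or> k = 1 \<or> k = 2" using k by auto
  let ?P = "{proj3 k m | m. (m,0) \<in> N}"
  have one: "((\<one>,\<one>,\<one>),0) \<in> N" using subgroup.one_closed[OF NW] by simp
  have sub: "subgroup ?P G"
  proof (rule subgroupI)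
    show "?P \<subseteq> carrier G" using Nel k3 by (auto simp: proj3_def)
    show "?P \<noteq> {}" using one by blast
    fix p q assume "p \<in> ?P" "q \<in> ?P"
    then obtain a b c a' b' c' where N1: "((a,b,c),0) \<in> N" and N2: "((a',b',c'),0) \<in> N"
      and pq: "p = proj3 k (a,b,c)" "q = proj3 k (a',b',c')" by auto
    have cc: "a \<in> carrier G" "b \<in> carrier G" "c \<in> carrier G"
      "a' \<in> carrier G" "b' \<in> carrier G" "c' \<in> carrier G" using Nel2[OF N1] Nel2[OF N2] by auto
    have "inv\<^bsub>wr3 G\<^esub> ((a,b,c),0) \<in> N" by (rule subgroup.m_inv_closed[OF NW N1])
    then have "((inv a, inv b, inv c),0) \<in> N" using cc by (simp add: wr3_inv0)
    then show "inv p \<in> ?P" unfolding pq using k3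
      by (auto simp: proj3_def intro!: exI[of _ "(inv a, inv b, inv c)"])
    have "((a,b,c),0) \<otimes>\<^bsub>wr3 G\<^esub> ((a',b',c'),0) \<in> N" by (rule subgroup.m_closed[OF NW N1 N2])
    then have "((a \<otimes> a', b \<otimes> b', c \<otimes> c'),0) \<in> N" by simp
    then show "p \<otimes> q \<in> ?P" unfolding pq using k3
      by (auto simp: proj3_def intro!: exI[of _ "(a \<otimes> a', b \<otimes> b', c \<otimes> c')"])
  qed
  show ?thesis
  proof (subst normal_inv_iff, intro conjI sub ballI)
    fix t p assume t: "t \<in> carrier G" and "p \<in> ?P"
    then obtain a b c where N1: "((a,b,c),0) \<in> N" and pq: "p = proj3 k (a,b,c)" by auto
    have cc: "a \<in> carrier G" "b \<in> carrier G" "c \<in> carrier G" using Nel2[OF N1] by auto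
    define e where "e = (if k = 0 then (t,\<one>,\<one>) else if k = 1 then (\<one>,t,\<one>) else (\<one>,\<one>,t))"
    have eM: "(e,0) \<in> Mbase G" using t by (auto simp: e_def Mbase_def emb3_def)
    have "(e,0) \<otimes>\<^bsub>wr3 G\<^esub> ((a,b,c),0) \<otimes>\<^bsub>wr3 G\<^esub> inv\<^bsub>wr3 G\<^esub> (e,0) \<in> N" by (rule cj[OF eM N1])
    then have "(if k = 0 then (t \<otimes> a \<otimes> inv t, b, c) else if k = 1 then (a, t \<otimes> b \<otimes> inv t, c)
                else (a, b, t \<otimes> c \<otimes> inv t), 0) \<in> N"
      using t cc k3 by (auto simp: e_def wr3_inv0)
    then show "t \<otimes> p \<otimes> inv t \<in> ?P" unfolding pq using k3
      by (auto simp: proj3_def split: if_splits intro!: exI)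
  qed
qed

lemma (in simple_group) normal_base_trivial:
  assumes N: "N \<lhd> (wr3 G)\<lparr>carrier := Mbase G\<rparr>"
    and NY: "N \<subseteq> emb3 (Y1 \<times> Y2 \<times> Y3)"
    and Y: "Y1 \<subseteq> carrier G" "Y2 \<subseteq> carrier G" "Y3 \<subseteq> carrier G"
    and Yp: "Y1 \<noteq> carrier G" "Y2 \<noteq> carrier G" "Y3 \<noteq> carrier G"
  shows "N = {\<one>\<^bsub>wr3 G\<^esub>}"
proof -
  interpret W: group "wr3 G" by (rule wr3_group)
  have MW: "subgroup (Mbase G) (wr3 G)" using Mbase_normal by (rule normal_imp_subgroup)
  interpret R: group "(wr3 G)\<lparr>carrier := Mbase G\<rparr>" by (rule W.subgroup_imp_group[OF MW])
  have NR: "subgroup N ((wr3 G)\<lparr>carrier := Mbase G\<rparr>)" using N by (rule normal_imp_subgroup)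
  have NW: "subgroup N (wr3 G)" by (rule W.incl_subgroup[OF MW NR])
  have NM: "N \<subseteq> Mbase G" using NR subgroup.subset by force
  have cj: "\<And>x h. x \<in> Mbase G \<Longrightarrow> h \<in> N \<Longrightarrow> x \<otimes>\<^bsub>wr3 G\<^esub> h \<otimes>\<^bsub>wr3 G\<^esub> inv\<^bsub>wr3 G\<^esub> x \<in> N"
  proof -
    fix x h assume x: "x \<in> Mbase G" and h: "h \<in> N"
    have "x \<otimes>\<^bsub>(wr3 G)\<lparr>carrier := Mbase G\<rparr>\<^esub> h \<otimes>\<^bsub>(wr3 G)\<lparr>carrier := Mbase G\<rparr>\<^esub> inv\<^bsub>(wr3 G)\<lparr>carrier := Mbase G\<rparr>\<^esub> x \<in> N"
      using N x h by (simp add: R.normal_inv_iff)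
    then show "x \<otimes>\<^bsub>wr3 G\<^esub> h \<otimes>\<^bsub>wr3 G\<^esub> inv\<^bsub>wr3 G\<^esub> x \<in> N"
      using W.m_inv_consistent[OF MW x] by simp
  qed
  have triv: "{proj3 k m | m. (m,0) \<in> N} = {\<one>}" if k: "k < 3" for k
  proof -
    have nk: "{proj3 k m | m. (m,0) \<in> N} \<lhd> G" by (rule coord_normal[OF NW NM cj k])
    have "{proj3 k m | m. (m,0) \<in> N} \<subseteq> (if k = 0 then Y1 else if k = 1 then Y2 else Y3)"
      using NY by (auto simp: emb3_def proj3_def)
    then have "{proj3 k m | m. (m,0) \<in> N} \<noteq> carrier G" using Y Yp by (auto split: if_splits)
    then show ?thesis using no_real_normal_subgroup[OF nk] by blast
  qed
  show ?thesis
  proof (intro equalityI subsetI)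
    fix z assume z: "z \<in> N"
    then obtain a b c where zz: "z = ((a,b,c),0)" using NM unfolding Mbase_def emb3_def by blast
    have "a \<in> {proj3 0 m | m. (m,0) \<in> N}" using z zz by (force simp: proj3_def)
    moreover have "{proj3 0 m | m. (m,0) \<in> N} = {\<one>}" by (rule triv) simp
    ultimately have 1: "a = \<one>" by blast
    have "b \<in> {proj3 1 m | m. (m,0) \<in> N}" using z zz by (force simp: proj3_def)
    moreover have "{proj3 1 m | m. (m,0) \<in> N} = {\<one>}" by (rule triv) simp
    ultimately have 2: "b = \<one>" by blast
    have "c \<in> {proj3 2 m | m. (m,0) \<in> N}" using z zz by (force simp: proj3_def)
    moreover have "{proj3 2 m | m. (m,0) \<in> N} = {\<one>}" by (rule triv) simp
    ultimately have 3: "c = \<one>" by blast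
    note 1 2 3
    then show "z \<in> {\<one>\<^bsub>wr3 G\<^esub>}" using zz by simp
  next
    fix z assume "z \<in> {\<one>\<^bsub>wr3 G\<^esub>}"
    then show "z \<in> N" using subgroup.one_closed[OF NW] by simp
  qed
qed


lemma (in simple_group) Mbase_minimal:
  assumes nonab: "\<not> comm_group G"
  shows "minimal_normal (wr3 G) (Mbase G)"
  unfolding minimal_normal_def
proof (intro conjI allI impI)
  interpret W: group "wr3 G" by (rule wr3_group)
  show "Mbase G \<lhd> wr3 G" by (rule Mbase_normal)
  obtain a where a: "a \<in> carrier G" "a \<noteq> \<one>" using simple_not_triv one_closed by blast
  have aM: "((a,\<one>,\<one>),0) \<in> Mbase G" using a by (simp add: Mbase_def emb3_def)
  show "Mbase G \<noteq> {\<one>\<^bsub>wr3 G\<^esub>}"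
  proof
    assume "Mbase G = {\<one>\<^bsub>wr3 G\<^esub>}"
    then have "((a,\<one>,\<one>),0) = \<one>\<^bsub>wr3 G\<^esub>" using aM by blast
    then show False using a by simp
  qed
  fix L assume L: "L \<lhd> wr3 G \<and> L \<subseteq> Mbase G"
  then have Ln: "L \<lhd> wr3 G" and LM: "L \<subseteq> Mbase G" by auto
  have LW: "subgroup L (wr3 G)" using Ln by (rule normal_imp_subgroup)
  have cj: "\<And>g h. g \<in> carrier (wr3 G) \<Longrightarrow> h \<in> L \<Longrightarrow> g \<otimes>\<^bsub>wr3 G\<^esub> h \<otimes>\<^bsub>wr3 G\<^esub> inv\<^bsub>wr3 G\<^esub> g \<in> L"
    using Ln by (simp add: normal.inv_op_closed2)
  have Lel: "\<And>a b c. ((a,b,c),0) \<in> L \<Longrightarrow> a \<in> carrier G \<and> b \<in> carrier G \<and> c \<in> carrier G"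
    using LM unfolding Mbase_def emb3_def by blast
  have one: "\<one>\<^bsub>wr3 G\<^esub> \<in> L" by (rule subgroup.one_closed[OF LW])
  show "L = {\<one>\<^bsub>wr3 G\<^esub>} \<or> L = Mbase G"
  proof (cases "L = {\<one>\<^bsub>wr3 G\<^esub>}")
    case True then show ?thesis by blast
  next
    case False
    then have ne: "L \<noteq> {\<one>\<^bsub>wr3 G\<^esub>}" .
    then obtain x where x: "x \<in> L" "x \<noteq> \<one>\<^bsub>wr3 G\<^esub>" using one by blast
    then obtain x1 x2 x3 where xx: "x = ((x1,x2,x3),0)" using LM unfolding Mbase_def emb3_def by blast
    have xc: "x1 \<in> carrier G" "x2 \<in> carrier G" "x3 \<in> carrier G" using Lel x(1) xx by auto
    have c1: "((\<one>,\<one>,\<one>),1) \<in> carrier (wr3 G)" "((\<one>,\<one>,\<one>),2) \<in> carrier (wr3 G)" by auto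
    obtain y1 y2 y3 where y: "((y1,y2,y3),0) \<in> L" "y1 \<noteq> \<one>"
    proof -
      have "\<not> (x1 = \<one> \<and> x2 = \<one> \<and> x3 = \<one>)" using x(2) xx by simp
      then consider "x1 \<noteq> \<one>" | "x2 \<noteq> \<one>" | "x3 \<noteq> \<one>" by blast
      then show ?thesis
      proof cases
        case 1 then show ?thesis using that x xx by blast
      next
        case 2
        have "((\<one>,\<one>,\<one>),1) \<otimes>\<^bsub>wr3 G\<^esub> x \<otimes>\<^bsub>wr3 G\<^esub> inv\<^bsub>wr3 G\<^esub> ((\<one>,\<one>,\<one>),1) \<in> L"
          by (rule cj[OF c1(1) x(1)])
        then have "((x2,x3,x1),0) \<in> L" using xc xx by (simp add: wr3_inv1 wr3_inv1')
        then show ?thesis using that 2 by blast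
      next
        case 3
        have "((\<one>,\<one>,\<one>),2) \<otimes>\<^bsub>wr3 G\<^esub> x \<otimes>\<^bsub>wr3 G\<^esub> inv\<^bsub>wr3 G\<^esub> ((\<one>,\<one>,\<one>),2) \<in> L"
          by (rule cj[OF c1(2) x(1)])
        then have "((x3,x1,x2),0) \<in> L" using xc xx by (simp add: wr3_inv2)
        then show ?thesis using that 3 by blast
      qed
    qed
    have yc: "y1 \<in> carrier G" "y2 \<in> carrier G" "y3 \<in> carrier G" using Lel y(1) by auto
    obtain t where t: "t \<in> carrier G" "t \<otimes> y1 \<noteq> y1 \<otimes> t" using noncentral[OF nonab yc(1) y(2)] by blast
    define s where "s = t \<otimes> y1 \<otimes> inv t \<otimes> inv y1"
    have sc: "s \<in> carrier G" using t yc by (simp add: s_def)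
    have s1: "s \<noteq> \<one>" using comm_lemma[OF t(1) yc(1)] t(2) by (auto simp: s_def)
    have tc: "((t,\<one>,\<one>),0) \<in> carrier (wr3 G)" using t by simp
    have "((t,\<one>,\<one>),0) \<otimes>\<^bsub>wr3 G\<^esub> ((y1,y2,y3),0) \<otimes>\<^bsub>wr3 G\<^esub> inv\<^bsub>wr3 G\<^esub> ((t,\<one>,\<one>),0) \<in> L"
      by (rule cj[OF tc y(1)])
    then have "(((t,\<one>,\<one>),0) \<otimes>\<^bsub>wr3 G\<^esub> ((y1,y2,y3),0) \<otimes>\<^bsub>wr3 G\<^esub> inv\<^bsub>wr3 G\<^esub> ((t,\<one>,\<one>),0))
          \<otimes>\<^bsub>wr3 G\<^esub> inv\<^bsub>wr3 G\<^esub> ((y1,y2,y3),0) \<in> L"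
      by (rule subgroup.m_closed[OF LW _ subgroup.m_inv_closed[OF LW y(1)]])
    then have sL: "((s,\<one>,\<one>),0) \<in> L" using t yc by (simp add: wr3_inv0 s_def m_assoc)
    define P where "P = {p \<in> carrier G. ((p,\<one>,\<one>),0) \<in> L}"
    have Psub: "subgroup P G"
    proof (rule subgroupI)
      show "P \<subseteq> carrier G" "P \<noteq> {}" using sL sc by (auto simp: P_def)
      fix p q assume p: "p \<in> P" and q: "q \<in> P"
      have "inv\<^bsub>wr3 G\<^esub> ((p,\<one>,\<one>),0) \<in> L" using p by (intro subgroup.m_inv_closed[OF LW]) (auto simp: P_def)
      then show "inv p \<in> P" using p by (simp add: P_def wr3_inv0)
      have "((p,\<one>,\<one>),0) \<otimes>\<^bsub>wr3 G\<^esub> ((q,\<one>,\<one>),0) \<in> L" using p q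
        by (intro subgroup.m_closed[OF LW]) (auto simp: P_def)
      then show "p \<otimes> q \<in> P" using p q by (simp add: P_def)
    qed
    have "P \<lhd> G"
    proof (subst normal_inv_iff, intro conjI Psub ballI)
      fix g p assume g: "g \<in> carrier G" and p: "p \<in> P"
      have gc: "((g,\<one>,\<one>),0) \<in> carrier (wr3 G)" using g by simp
      have "((g,\<one>,\<one>),0) \<otimes>\<^bsub>wr3 G\<^esub> ((p,\<one>,\<one>),0) \<otimes>\<^bsub>wr3 G\<^esub> inv\<^bsub>wr3 G\<^esub> ((g,\<one>,\<one>),0) \<in> L"
        using p by (intro cj[OF gc]) (auto simp: P_def)
      then show "g \<otimes> p \<otimes> inv g \<in> P" using g p by (simp add: P_def wr3_inv0)
    qed
    then have "P = carrier G \<or> P = {\<one>}" by (rule no_real_normal_subgroup)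
    moreover have "s \<in> P" using sL sc by (simp add: P_def)
    ultimately have Pc: "P = carrier G" using s1 by auto
    have "L = Mbase G"
    proof (intro equalityI LM subsetI)
      fix z assume "z \<in> Mbase G"
      then obtain a b c where zz: "z = ((a,b,c),0)" and abc: "a \<in> carrier G" "b \<in> carrier G" "c \<in> carrier G"
        unfolding Mbase_def emb3_def by blast
      have e: "((p,\<one>,\<one>),0) \<in> L" if "p \<in> carrier G" for p using that Pc P_def by blast
      have "((\<one>,\<one>,\<one>),2) \<otimes>\<^bsub>wr3 G\<^esub> ((b,\<one>,\<one>),0) \<otimes>\<^bsub>wr3 G\<^esub> inv\<^bsub>wr3 G\<^esub> ((\<one>,\<one>,\<one>),2) \<in> L"
        by (rule cj[OF c1(2) e[OF abc(2)]])
      then have eb: "((\<one>,b,\<one>),0) \<in> L" using abc by (simp add: wr3_inv2)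
      have "((\<one>,\<one>,\<one>),1) \<otimes>\<^bsub>wr3 G\<^esub> ((c,\<one>,\<one>),0) \<otimes>\<^bsub>wr3 G\<^esub> inv\<^bsub>wr3 G\<^esub> ((\<one>,\<one>,\<one>),1) \<in> L"
        by (rule cj[OF c1(1) e[OF abc(3)]])
      then have ec: "((\<one>,\<one>,c),0) \<in> L" using abc by (simp add: wr3_inv1 wr3_inv1')
      have "((a,\<one>,\<one>),0) \<otimes>\<^bsub>wr3 G\<^esub> ((\<one>,b,\<one>),0) \<otimes>\<^bsub>wr3 G\<^esub> ((\<one>,\<one>,c),0) \<in> L"
        by (intro subgroup.m_closed[OF LW] e abc eb ec)
      then show "z \<in> L" using abc zz by simp
    qed
    then show ?thesis by blast
  qed
qed


lemma lessThan_3: "{..<3::nat} = {0,1,2}" by auto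
lemma less3: "(j::nat) < 3 \<longleftrightarrow> j = 0 \<or> j = 1 \<or> j = 2" by auto

lemma emb3_Int[simp]: "emb3 S \<inter> emb3 S' = emb3 (S \<inter> S')"
  by (auto simp: emb3_def)

lemma set3: "(\<And>j. j < 3 \<Longrightarrow> f j \<noteq> c) \<Longrightarrow> {f j | j. j < (3::nat) \<and> f j \<noteq> c} = {f 0, f 1, f 2}"
  by (auto simp: less3)

lemma proj_image:
  assumes "X1 \<noteq> {}" "X2 \<noteq> {}" "X3 \<noteq> {}"
  shows "proj3 0 ` (X1\<times>X2\<times>X3) = X1" "proj3 1 ` (X1\<times>X2\<times>X3) = X2" "proj3 2 ` (X1\<times>X2\<times>X3) = X3"
  using assms by (force simp: proj3_def image_def)+

lemma (in group) gen_emb3: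
  assumes "subgroup P1 G" "subgroup P2 G" "subgroup P3 G" "U \<subseteq> emb3 (P1\<times>P2\<times>P3)"
    and "\<And>a b c. a \<in> P1 \<Longrightarrow> b \<in> P2 \<Longrightarrow> c \<in> P3 \<Longrightarrow> ((a,b,c),0) \<in> generate (wr3 G) U"
  shows "generate (wr3 G) U = emb3 (P1\<times>P2\<times>P3)"
proof
  show "generate (wr3 G) U \<subseteq> emb3 (P1\<times>P2\<times>P3)"
    by (rule group.generate_subgroup_incl[OF wr3_group assms(4) emb3_subgroup[OF assms(1-3)]])
  show "emb3 (P1\<times>P2\<times>P3) \<subseteq> generate (wr3 G) U"
    using assms(5) by (auto simp: emb3_def)
qed


lemma (in group) cyc_invariant:
  assumes sX: "subgroup P G" and sY: "subgroup Q G" and sZ: "subgroup R G"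
    and d1: "d1 \<in> P" "d1 \<in> Q" "d1 \<in> R" and d2: "d2 \<in> P" "d2 \<in> Q" "d2 \<in> R"
    and d3: "d3 \<in> P" "d3 \<in> Q" "d3 \<in> R" and i: "i = 0 \<or> i = 1 \<or> i = 2"
  shows "(\<lambda>S. (((d1,d2,d3),i) <#\<^bsub>wr3 G\<^esub> S) #>\<^bsub>wr3 G\<^esub> inv\<^bsub>wr3 G\<^esub> ((d1,d2,d3),i)) `
      {emb3 (P\<times>Q\<times>R), emb3 (Q\<times>R\<times>P), emb3 (R\<times>P\<times>Q)} = {emb3 (P\<times>Q\<times>R), emb3 (Q\<times>R\<times>P), emb3 (R\<times>P\<times>Q)}"
  using i
proof (elim disjE)
  assume "i = 0"
  then show ?thesis
    by (simp only: image_insert image_empty conj_emb3_0[OF sX sY sZ d1(1) d2(2) d3(3)]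
      conj_emb3_0[OF sY sZ sX d1(2) d2(3) d3(1)] conj_emb3_0[OF sZ sX sY d1(3) d2(1) d3(2)])
next
  assume "i = 1"
  then have "(\<lambda>S. (((d1,d2,d3),i) <#\<^bsub>wr3 G\<^esub> S) #>\<^bsub>wr3 G\<^esub> inv\<^bsub>wr3 G\<^esub> ((d1,d2,d3),i)) `
      {emb3 (P\<times>Q\<times>R), emb3 (Q\<times>R\<times>P), emb3 (R\<times>P\<times>Q)} = {emb3 (Q\<times>R\<times>P), emb3 (R\<times>P\<times>Q), emb3 (P\<times>Q\<times>R)}"
    by (simp only: image_insert image_empty conj_emb3_1[OF sX sY sZ d1(1) d2(2) d3(3)]
      conj_emb3_1[OF sY sZ sX d1(2) d2(3) d3(1)] conj_emb3_1[OF sZ sX sY d1(3) d2(1) d3(2)])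
  then show ?thesis by blast
next
  assume "i = 2"
  then have "(\<lambda>S. (((d1,d2,d3),i) <#\<^bsub>wr3 G\<^esub> S) #>\<^bsub>wr3 G\<^esub> inv\<^bsub>wr3 G\<^esub> ((d1,d2,d3),i)) `
      {emb3 (P\<times>Q\<times>R), emb3 (Q\<times>R\<times>P), emb3 (R\<times>P\<times>Q)} = {emb3 (R\<times>P\<times>Q), emb3 (P\<times>Q\<times>R), emb3 (Q\<times>R\<times>P)}"
    by (simp only: image_insert image_empty conj_emb3_2[OF sX sY sZ d1(1) d2(2) d3(3)]
      conj_emb3_2[OF sY sZ sX d1(2) d2(3) d3(1)] conj_emb3_2[OF sZ sX sY d1(3) d2(1) d3(2)])
  then show ?thesis by blast
qed

theorem mainTheorem12:
  fixes T :: "('a, 'b) monoid_scheme" and A B C :: "'a set"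
  assumes simple: "simple_group T" and fin: "finite (carrier T)"
    and nonab: "\<not> comm_group T"
    and sA: "subgroup A T" and sB: "subgroup B T" and sC: "subgroup C T"
    and pA: "A \<noteq> carrier T" and pB: "B \<noteq> carrier T" and pC: "C \<noteq> carrier T"
    and dAB: "A \<noteq> B" and dBC: "B \<noteq> C" and dAC: "A \<noteq> C"
    and fA: "A <#>\<^bsub>T\<^esub> (B \<inter> C) = carrier T"
    and fB: "B <#>\<^bsub>T\<^esub> (C \<inter> A) = carrier T"
    and fC: "C <#>\<^bsub>T\<^esub> (A \<inter> B) = carrier T"
  shows "Ktrip A B C 0 \<inter> Ktrip A B C 1 \<inter> Ktrip A B C 2
             = (A \<inter> B \<inter> C) \<times> (A \<inter> B \<inter> C) \<times> (A \<inter> B \<inter> C)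
    \<and> (\<forall>c\<in>C3 T. (c <#\<^bsub>wr3 T\<^esub> emb3 (Ktrip A B C 0 \<inter> Ktrip A B C 1 \<inter> Ktrip A B C 2))
                     #>\<^bsub>wr3 T\<^esub> inv\<^bsub>wr3 T\<^esub> c
                   = emb3 (Ktrip A B C 0 \<inter> Ktrip A B C 1 \<inter> Ktrip A B C 2))
    \<and> group (wr3 T) \<and> subgroup (Hsub T A B C) (wr3 T)
    \<and> transitive_on (wr3 T) (carrier (wr3 T)) (coset_space (wr3 T) (Hsub T A B C))
    \<and> minimal_normal (wr3 T) (Mbase T)
    \<and> transitive_on (wr3 T) (Mbase T) (coset_space (wr3 T) (Hsub T A B C))
    \<and> cartesian_system (wr3 T) (Mbase T) (stab (wr3 T) (Hsub T A B C))
         (Mbase T \<inter> stab (wr3 T) (Hsub T A B C)) 3 (\<lambda>i. emb3 (Ktrip A B C i))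
    \<and> \<not> M_normal (wr3 T) (Mbase T) (Mbase T \<inter> stab (wr3 T) (Hsub T A B C)) 3
         (\<lambda>i. emb3 (Ktrip A B C i))
    \<and> (\<forall>i<3. card (Fset T (Ktrip A B C) 3 i) = 3)
    \<and> cartesian_system (wr3 T) (Mbase T) (stab (wr3 T) (Hsub T A B C))
         (Mbase T \<inter> stab (wr3 T) (Hsub T A B C)) 3 (\<lambda>i. emb3 (Ltrip T (A \<inter> B \<inter> C) i))
    \<and> M_normal (wr3 T) (Mbase T) (Mbase T \<inter> stab (wr3 T) (Hsub T A B C)) 3
         (\<lambda>i. emb3 (Ltrip T (A \<inter> B \<inter> C) i))"
proof -
  interpret T: simple_group T by (rule simple)
  interpret W: group "wr3 T" by (rule T.wr3_group)
  define D where "D = A \<inter> B \<inter> C"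
  have sD: "subgroup D T" unfolding D_def by (intro T.subgroups_Inter_pair sA sB sC)
  have sTT: "subgroup (carrier T) T" by (rule T.subgroup_self)
  have s1: "subgroup {\<one>\<^bsub>T\<^esub>} T" by (rule T.triv_subgroup)
  have Ac: "A \<subseteq> carrier T" and Bc: "B \<subseteq> carrier T" and Cc: "C \<subseteq> carrier T" and Dc: "D \<subseteq> carrier T"
    using sA sB sC sD subgroup.subset by blast+
  have Dc': "\<And>x. x \<in> D \<Longrightarrow> x \<in> carrier T" using Dc by blast
  have DA: "D \<subseteq> A" "D \<subseteq> B" "D \<subseteq> C" unfolding D_def by auto
  have one: "\<one>\<^bsub>T\<^esub> \<in> A" "\<one>\<^bsub>T\<^esub> \<in> B" "\<one>\<^bsub>T\<^esub> \<in> C" "\<one>\<^bsub>T\<^esub> \<in> D"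
    using sA sB sC sD subgroup.one_closed by blast+
  have Kint: "Ktrip A B C 0 \<inter> Ktrip A B C 1 \<inter> Ktrip A B C 2 = D \<times> D \<times> D"
    by (auto simp: Ktrip_def D_def)
  have HsubEq: "Hsub T A B C = (D \<times> D \<times> D) \<times> {0,1,2}"
  proof (intro equalityI subsetI)
    fix x assume "x \<in> Hsub T A B C"
    then obtain d i where "d \<in> D \<times> D \<times> D" "i < 3" "x = (d,0) \<otimes>\<^bsub>wr3 T\<^esub> ((\<one>\<^bsub>T\<^esub>,\<one>\<^bsub>T\<^esub>,\<one>\<^bsub>T\<^esub>),i)"
      unfolding Hsub_def Kint set_mult_def emb3_def C3_def by blast
    then show "x \<in> (D \<times> D \<times> D) \<times> {0,1,2}" by (auto simp: less3 Dc')
  next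
    fix x assume "x \<in> (D \<times> D \<times> D) \<times> {0::nat,1,2}"
    then obtain a b c i where abc: "a \<in> D" "b \<in> D" "c \<in> D" "i < 3" and x: "x = ((a,b,c),i)" by auto
    have "((a,b,c),i) = ((a,b,c),0) \<otimes>\<^bsub>wr3 T\<^esub> ((\<one>\<^bsub>T\<^esub>,\<one>\<^bsub>T\<^esub>,\<one>\<^bsub>T\<^esub>),i)"
      using abc Dc by auto
    then show "x \<in> Hsub T A B C" unfolding Hsub_def Kint set_mult_def emb3_def C3_def x
      using abc by blast
  qed
  have Hs: "subgroup (Hsub T A B C) (wr3 T)"
  proof (unfold HsubEq, rule W.subgroupI)
    show "(D \<times> D \<times> D) \<times> {0,1,2} \<subseteq> carrier (wr3 T)" using Dc by auto
    show "(D \<times> D \<times> D) \<times> {0,1,2} \<noteq> {}" using one by auto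
    fix x y assume x: "x \<in> (D \<times> D \<times> D) \<times> {0::nat,1,2}" and y: "y \<in> (D \<times> D \<times> D) \<times> {0::nat,1,2}"
    note cl = subgroup.m_closed[OF sD] subgroup.m_inv_closed[OF sD]
    show "inv\<^bsub>wr3 T\<^esub> x \<in> (D \<times> D \<times> D) \<times> {0,1,2}"
      using x Dc by (auto simp: T.wr3_inv0 T.wr3_inv1' T.wr3_inv2 cl subsetD)
    show "x \<otimes>\<^bsub>wr3 T\<^esub> y \<in> (D \<times> D \<times> D) \<times> {0,1,2}"
      using x y by (auto simp: cl)
  qed
  have stabH: "stab (wr3 T) (Hsub T A B C) = Hsub T A B C" by (rule W.stab_subgroup[OF Hs])
  have Mw: "Mbase T \<inter> stab (wr3 T) (Hsub T A B C) = emb3 (D \<times> D \<times> D)"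
    unfolding stabH unfolding HsubEq using Dc by (auto simp: Mbase_def emb3_def)
  have MW: "subgroup (Mbase T) (wr3 T)" using T.Mbase_normal by (rule normal_imp_subgroup)
  have minimal: "minimal_normal (wr3 T) (Mbase T)" by (rule T.Mbase_minimal[OF nonab])
  have Mne: "Mbase T \<noteq> {\<one>\<^bsub>wr3 T\<^esub>}" using minimal unfolding minimal_normal_def by blast
  have Mb: "Mbase T = emb3 (carrier T \<times> carrier T \<times> carrier T)" by (simp add: Mbase_def)

  have P1: "Ktrip A B C 0 \<inter> Ktrip A B C 1 \<inter> Ktrip A B C 2 = (A \<inter> B \<inter> C) \<times> (A \<inter> B \<inter> C) \<times> (A \<inter> B \<inter> C)"
    using Kint D_def by simp
  have P2: "\<forall>c\<in>C3 T. (c <#\<^bsub>wr3 T\<^esub> emb3 (Ktrip A B C 0 \<inter> Ktrip A B C 1 \<inter> Ktrip A B C 2))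
                     #>\<^bsub>wr3 T\<^esub> inv\<^bsub>wr3 T\<^esub> c
                   = emb3 (Ktrip A B C 0 \<inter> Ktrip A B C 1 \<inter> Ktrip A B C 2)"
  proof
    fix c assume "c \<in> C3 T"
    then obtain i where i: "i < 3" and c: "c = ((\<one>\<^bsub>T\<^esub>,\<one>\<^bsub>T\<^esub>,\<one>\<^bsub>T\<^esub>),i)" unfolding C3_def by blast
    show "(c <#\<^bsub>wr3 T\<^esub> emb3 (Ktrip A B C 0 \<inter> Ktrip A B C 1 \<inter> Ktrip A B C 2)) #>\<^bsub>wr3 T\<^esub> inv\<^bsub>wr3 T\<^esub> c
        = emb3 (Ktrip A B C 0 \<inter> Ktrip A B C 1 \<inter> Ktrip A B C 2)"
    proof -
      consider "i = 0" | "i = 1" | "i = 2" using i by force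
      then show ?thesis
      proof cases
        case 1 then show ?thesis by (simp only: Kint c T.conj_emb3_0[OF sD sD sD one(4) one(4) one(4)])
      next
        case 2 then show ?thesis by (simp only: Kint c T.conj_emb3_1[OF sD sD sD one(4) one(4) one(4)])
      next
        case 3 then show ?thesis by (simp only: Kint c T.conj_emb3_2[OF sD sD sD one(4) one(4) one(4)])
      qed
    qed
  qed
  have P3: "transitive_on (wr3 T) (carrier (wr3 T)) (coset_space (wr3 T) (Hsub T A B C))"
    by (rule W.transitive_cosets[OF Hs])
  have P5: "transitive_on (wr3 T) (Mbase T) (coset_space (wr3 T) (Hsub T A B C))"
    unfolding transitive_on_def coset_space_def
  proof (clarify)
    fix g1 g2 assume g: "g1 \<in> carrier (wr3 T)" "g2 \<in> carrier (wr3 T)"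
    define k where "k = (snd g1 + 3 - snd g2) mod 3"
    define c where "c = ((\<one>\<^bsub>T\<^esub>,\<one>\<^bsub>T\<^esub>,\<one>\<^bsub>T\<^esub>),k)"
    have k3: "k < 3" unfolding k_def by simp
    have cH: "c \<in> Hsub T A B C" unfolding HsubEq c_def using one(4) k3 by (simp add: less3)
    have cc: "c \<in> carrier (wr3 T)" by (rule subgroup.mem_carrier[OF Hs cH])
    have Hc: "Hsub T A B C \<subseteq> carrier (wr3 T)" by (rule subgroup.subset[OF Hs])
    have "c \<in> stab (wr3 T) (Hsub T A B C)" using cH stabH by simp
    then have cHH: "c <#\<^bsub>wr3 T\<^esub> Hsub T A B C = Hsub T A B C" by (simp add: stab_def)
    define m where "m = g2 \<otimes>\<^bsub>wr3 T\<^esub> c \<otimes>\<^bsub>wr3 T\<^esub> inv\<^bsub>wr3 T\<^esub> g1"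
    have mc: "m \<in> carrier (wr3 T)" unfolding m_def by (intro W.m_closed W.inv_closed g cc)
    have s12: "snd g1 < 3" "snd g2 < 3" using g by auto
    have "snd m = ((snd g2 + k) mod 3 + (3 - snd g1) mod 3) mod 3"
      unfolding m_def by (simp only: T.wr3_snd_mult T.wr3_snd_inv[OF g(1)]) (simp add: c_def)
    also have "\<dots> = 0" using s12 unfolding k_def less3 by (elim disjE) simp_all
    finally have "m \<in> Mbase T" using mc by (simp add: T.Mbase_alt)
    moreover have "m <#\<^bsub>wr3 T\<^esub> (g1 <#\<^bsub>wr3 T\<^esub> Hsub T A B C) = g2 <#\<^bsub>wr3 T\<^esub> Hsub T A B C"
    proof -
      have "m <#\<^bsub>wr3 T\<^esub> (g1 <#\<^bsub>wr3 T\<^esub> Hsub T A B C) = (m \<otimes>\<^bsub>wr3 T\<^esub> g1) <#\<^bsub>wr3 T\<^esub> Hsub T A B C"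
        using W.lcos_m_assoc[OF Hc mc g(1)] .
      also have "m \<otimes>\<^bsub>wr3 T\<^esub> g1 = g2 \<otimes>\<^bsub>wr3 T\<^esub> c" unfolding m_def using g cc by (simp add: W.m_assoc del: wr3_carrier wr3_one)
      also have "(g2 \<otimes>\<^bsub>wr3 T\<^esub> c) <#\<^bsub>wr3 T\<^esub> Hsub T A B C = g2 <#\<^bsub>wr3 T\<^esub> (c <#\<^bsub>wr3 T\<^esub> Hsub T A B C)"
        using W.lcos_m_assoc[OF Hc g(2) cc] by simp
      finally show ?thesis using cHH by simp
    qed
    ultimately show "\<exists>g\<in>Mbase T. g <#\<^bsub>wr3 T\<^esub> (g1 <#\<^bsub>wr3 T\<^esub> Hsub T A B C) = g2 <#\<^bsub>wr3 T\<^esub> Hsub T A B C"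
      by blast
  qed
  have diff3: "{..<3::nat} - {0} = {1,2}" "{..<3::nat} - {1} = {0,2}" "{..<3::nat} - {2} = {0,1}" by auto
  have Icalc: "\<And>S. S \<subseteq> carrier T \<times> carrier T \<times> carrier T \<Longrightarrow> Mbase T \<inter> emb3 S = emb3 S"
    by (auto simp: Mb emb3_def)
  have stabE: "\<exists>d1 d2 d3 i. g = ((d1,d2,d3),i) \<and> d1 \<in> D \<and> d2 \<in> D \<and> d3 \<in> D \<and> (i = 0 \<or> i = 1 \<or> i = 2)"
    if "g \<in> stab (wr3 T) (Hsub T A B C)" for g
    using that unfolding stabH unfolding HsubEq by auto
  have K3: "(\<lambda>i. emb3 (Ktrip A B C i)) ` {..<3} = {emb3 (A\<times>B\<times>C), emb3 (B\<times>C\<times>A), emb3 (C\<times>A\<times>B)}"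
    by (simp add: lessThan_3 Ktrip_def)
  have P6: "cartesian_system (wr3 T) (Mbase T) (stab (wr3 T) (Hsub T A B C))
         (Mbase T \<inter> stab (wr3 T) (Hsub T A B C)) 3 (\<lambda>i. emb3 (Ktrip A B C i))"
    unfolding cartesian_system_def
  proof (intro conjI allI impI ballI)
    fix i :: nat assume "i < 3"
    show "subgroup (emb3 (Ktrip A B C i)) (wr3 T)"
      unfolding Ktrip_def by (simp add: T.emb3_subgroup sA sB sC)
    show "emb3 (Ktrip A B C i) \<subseteq> Mbase T"
      unfolding Mb Ktrip_def emb3_def using Ac Bc Cc by auto
  next
    fix g assume "g \<in> stab (wr3 T) (Hsub T A B C)"
    then obtain d1 d2 d3 i where g: "g = ((d1,d2,d3),i)" and dd: "d1 \<in> D" "d2 \<in> D" "d3 \<in> D"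
      and i: "i = 0 \<or> i = 1 \<or> i = 2" using stabE by blast
    have dd': "d1 \<in> A" "d1 \<in> B" "d1 \<in> C" "d2 \<in> A" "d2 \<in> B" "d2 \<in> C" "d3 \<in> A" "d3 \<in> B" "d3 \<in> C"
      using dd unfolding D_def by auto
    show "(\<lambda>Z. (g <#\<^bsub>wr3 T\<^esub> Z) #>\<^bsub>wr3 T\<^esub> inv\<^bsub>wr3 T\<^esub> g) ` (\<lambda>i. emb3 (Ktrip A B C i)) ` {..<3} =
          (\<lambda>i. emb3 (Ktrip A B C i)) ` {..<3}"
      unfolding K3 g by (rule T.cyc_invariant[OF sA sB sC dd' i])
  next
    show "Mbase T \<inter> (\<Inter>i\<in>{..<3}. emb3 (Ktrip A B C i)) = Mbase T \<inter> stab (wr3 T) (Hsub T A B C)"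
      unfolding Mw using Ac Bc Cc by (auto simp: Mb lessThan_3 Ktrip_def emb3_def D_def)
  next
    fix i :: nat assume i: "i < 3"
    have fB': "B <#>\<^bsub>T\<^esub> (A \<inter> C) = carrier T" using fB by (simp add: Int_commute)
    have fC': "C <#>\<^bsub>T\<^esub> (B \<inter> A) = carrier T" using fC by (simp add: Int_commute)
    have fA': "A <#>\<^bsub>T\<^esub> (C \<inter> B) = carrier T" using fA by (simp add: Int_commute)
    consider "i = 0" | "i = 1" | "i = 2" using i by force
    then show "emb3 (Ktrip A B C i) <#>\<^bsub>wr3 T\<^esub> (Mbase T \<inter> (\<Inter>j\<in>{..<3} - {i}. emb3 (Ktrip A B C j))) = Mbase T"
    proof cases
      case 1
      have "Mbase T \<inter> (\<Inter>j\<in>{..<3} - {i}. emb3 (Ktrip A B C j)) = emb3 ((B\<inter>C)\<times>(C\<inter>A)\<times>(A\<inter>B))"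
      proof -
        have e: "(\<Inter>j\<in>{1,2}. emb3 (Ktrip A B C j)) = emb3 ((B\<inter>C)\<times>(C\<inter>A)\<times>(A\<inter>B))" by (simp add: Ktrip_def Times_Int_Times)
        have ss: "(B\<inter>C)\<times>(C\<inter>A)\<times>(A\<inter>B) \<subseteq> carrier T \<times> carrier T \<times> carrier T" using Ac Bc Cc by auto
        show ?thesis unfolding 1 diff3 e using Icalc[OF ss] .
      qed
      then show ?thesis unfolding 1 by (simp add: Ktrip_def T.emb3_set_mult fA fB fC Mb)
    next
      case 2
      have "Mbase T \<inter> (\<Inter>j\<in>{..<3} - {i}. emb3 (Ktrip A B C j)) = emb3 ((A\<inter>C)\<times>(B\<inter>A)\<times>(C\<inter>B))"
      proof -
        have e: "(\<Inter>j\<in>{0,2}. emb3 (Ktrip A B C j)) = emb3 ((A\<inter>C)\<times>(B\<inter>A)\<times>(C\<inter>B))" by (simp add: Ktrip_def Times_Int_Times)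
        have ss: "(A\<inter>C)\<times>(B\<inter>A)\<times>(C\<inter>B) \<subseteq> carrier T \<times> carrier T \<times> carrier T" using Ac Bc Cc by auto
        show ?thesis unfolding 2 diff3 e using Icalc[OF ss] .
      qed
      then show ?thesis unfolding 2 by (simp add: Ktrip_def T.emb3_set_mult fA' fB' fC' Mb)
    next
      case 3
      have "Mbase T \<inter> (\<Inter>j\<in>{..<3} - {i}. emb3 (Ktrip A B C j)) = emb3 ((A\<inter>B)\<times>(B\<inter>C)\<times>(C\<inter>A))"
      proof -
        have e: "(\<Inter>j\<in>{0,1}. emb3 (Ktrip A B C j)) = emb3 ((A\<inter>B)\<times>(B\<inter>C)\<times>(C\<inter>A))" by (simp add: Ktrip_def Times_Int_Times)
        have ss: "(A\<inter>B)\<times>(B\<inter>C)\<times>(C\<inter>A) \<subseteq> carrier T \<times> carrier T \<times> carrier T" using Ac Bc Cc by auto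
        show ?thesis unfolding 3 diff3 e using Icalc[OF ss] .
      qed
      then show ?thesis unfolding 3 by (simp add: Ktrip_def T.emb3_set_mult fA fB fC Mb)
    qed
  qed
  have P7: "\<not> M_normal (wr3 T) (Mbase T) (Mbase T \<inter> stab (wr3 T) (Hsub T A B C)) 3
         (\<lambda>i. emb3 (Ktrip A B C i))"
  proof
    assume "M_normal (wr3 T) (Mbase T) (Mbase T \<inter> stab (wr3 T) (Hsub T A B C)) 3 (\<lambda>i. emb3 (Ktrip A B C i))"
    then obtain Ms where Mn: "\<forall>i<3. Ms i \<lhd> (wr3 T)\<lparr>carrier := Mbase T\<rparr>"
      and Mg: "generate (wr3 T) (\<Union>i\<in>{..<3}. Ms i) = Mbase T"
      and MK: "\<forall>i<3. emb3 (Ktrip A B C i) = (Ms i \<inter> (Mbase T \<inter> stab (wr3 T) (Hsub T A B C))) <#>\<^bsub>wr3 T\<^esub>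
                 generate (wr3 T) (\<Union>j\<in>{..<3} - {i}. Ms j)"
      unfolding M_normal_def by blast
    have MsR: "subgroup (Ms i) ((wr3 T)\<lparr>carrier := Mbase T\<rparr>)" if "i < 3" for i
      using Mn that normal_imp_subgroup by blast
    have MsM: "Ms i \<subseteq> Mbase T" if "i < 3" for i
      using subgroup.subset[OF MsR[OF that]] by simp
    have Mc: "Mbase T \<subseteq> carrier (wr3 T)" by (rule subgroup.subset[OF MW])
    have one_Ms: "\<one>\<^bsub>wr3 T\<^esub> \<in> Ms i" if "i < 3" for i
      using subgroup.one_closed[OF MsR[OF that]] by simp
    have one_Mw: "\<one>\<^bsub>wr3 T\<^esub> \<in> Mbase T \<inter> stab (wr3 T) (Hsub T A B C)"
      unfolding Mw using one(4) by (simp add: emb3_def)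
    have genK: "generate (wr3 T) (\<Union>j\<in>{..<3} - {i}. Ms j) \<subseteq> emb3 (Ktrip A B C i)" if i: "i < 3" for i
    proof
      fix x assume x: "x \<in> generate (wr3 T) (\<Union>j\<in>{..<3} - {i}. Ms j)"
      have "(\<Union>j\<in>{..<3} - {i}. Ms j) \<subseteq> carrier (wr3 T)" using MsM Mc by blast
      then have xc: "x \<in> carrier (wr3 T)" using W.generate_in_carrier x by blast
      have "\<one>\<^bsub>wr3 T\<^esub> \<otimes>\<^bsub>wr3 T\<^esub> x \<in> (Ms i \<inter> (Mbase T \<inter> stab (wr3 T) (Hsub T A B C))) <#>\<^bsub>wr3 T\<^esub>
                 generate (wr3 T) (\<Union>j\<in>{..<3} - {i}. Ms j)"
        unfolding set_mult_def using one_Ms[OF i] one_Mw x by blast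
      then have xm: "x \<in> (Ms i \<inter> (Mbase T \<inter> stab (wr3 T) (Hsub T A B C))) <#>\<^bsub>wr3 T\<^esub>
                 generate (wr3 T) (\<Union>j\<in>{..<3} - {i}. Ms j)" by (simp only: W.l_one[OF xc])
      show "x \<in> emb3 (Ktrip A B C i)" using xm MK[rule_format, OF i] by (simp only:)
    qed
    have MsK: "Ms j \<subseteq> emb3 (Ktrip A B C i)" if "i < 3" "j < 3" "j \<noteq> i" for i j
    proof -
      have "Ms j \<subseteq> generate (wr3 T) (\<Union>j\<in>{..<3} - {i}. Ms j)"
        using that by (blast intro: generate.incl)
      then show ?thesis using genK[OF that(1)] by blast
    qed
    have Mni: "Ms 0 \<lhd> (wr3 T)\<lparr>carrier := Mbase T\<rparr>" "Ms 1 \<lhd> (wr3 T)\<lparr>carrier := Mbase T\<rparr>"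
      "Ms 2 \<lhd> (wr3 T)\<lparr>carrier := Mbase T\<rparr>" using Mn by simp_all
    have propr: "\<And>P Q. P \<subseteq> carrier T \<Longrightarrow> P \<noteq> carrier T \<Longrightarrow> P \<inter> Q \<noteq> carrier T" by blast
    have "Ms 0 \<subseteq> emb3 (Ktrip A B C 1) \<inter> emb3 (Ktrip A B C 2)" using MsK[of 1 0] MsK[of 2 0] by (simp del: emb3_Int)
    then have "Ms 0 \<subseteq> emb3 ((B\<inter>C)\<times>(C\<inter>A)\<times>(A\<inter>B))" by (simp add: Ktrip_def Times_Int_Times)
    then have M0: "Ms 0 = {\<one>\<^bsub>wr3 T\<^esub>}"
      by (rule T.normal_base_trivial[OF Mni(1)]) (use Ac Bc Cc pA pB pC propr in auto)
    have "Ms 1 \<subseteq> emb3 (Ktrip A B C 0) \<inter> emb3 (Ktrip A B C 2)" using MsK[of 0 1] MsK[of 2 1] by (simp del: emb3_Int)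
    then have "Ms 1 \<subseteq> emb3 ((A\<inter>C)\<times>(B\<inter>A)\<times>(C\<inter>B))" by (simp add: Ktrip_def Times_Int_Times)
    then have M1: "Ms 1 = {\<one>\<^bsub>wr3 T\<^esub>}"
      by (rule T.normal_base_trivial[OF Mni(2)]) (use Ac Bc Cc pA pB pC propr in auto)
    have "Ms 2 \<subseteq> emb3 (Ktrip A B C 0) \<inter> emb3 (Ktrip A B C 1)" using MsK[of 0 2] MsK[of 1 2] by (simp del: emb3_Int)
    then have "Ms 2 \<subseteq> emb3 ((A\<inter>B)\<times>(B\<inter>C)\<times>(C\<inter>A))" by (simp add: Ktrip_def Times_Int_Times)
    then have M2: "Ms 2 = {\<one>\<^bsub>wr3 T\<^esub>}"
      by (rule T.normal_base_trivial[OF Mni(3)]) (use Ac Bc Cc pA pB pC propr in auto)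
    have "(\<Union>i\<in>{..<3}. Ms i) = {\<one>\<^bsub>wr3 T\<^esub>}" unfolding lessThan_3 using M0 M1 M2 by simp
    then have "Mbase T \<subseteq> {\<one>\<^bsub>wr3 T\<^esub>}"
      using Mg W.generate_subgroup_incl[OF _ W.triv_subgroup] by (metis order_refl)
    moreover have "\<one>\<^bsub>wr3 T\<^esub> \<in> Mbase T" by (rule subgroup.one_closed[OF MW])
    ultimately show False using Mne by blast
  qed
  have P8: "\<forall>i<3. card (Fset T (Ktrip A B C) 3 i) = 3"
  proof (intro allI impI)
    fix i :: nat assume i: "i < 3"
    have ne: "A \<noteq> {}" "B \<noteq> {}" "C \<noteq> {}" using one by auto
    note pr = proj_image[OF ne(1) ne(2) ne(3)] proj_image[OF ne(2) ne(3) ne(1)] proj_image[OF ne(3) ne(1) ne(2)]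
    have K012: "Ktrip A B C 0 = A\<times>B\<times>C" "Ktrip A B C 1 = B\<times>C\<times>A" "Ktrip A B C 2 = C\<times>A\<times>B"
      by (simp_all add: Ktrip_def)
    have i3: "i = 0 \<or> i = 1 \<or> i = 2" using i by force
    have F: "Fset T (Ktrip A B C) 3 i = {proj3 i ` Ktrip A B C 0, proj3 i ` Ktrip A B C 1, proj3 i ` Ktrip A B C 2}"
      unfolding Fset_def
    proof (rule set3)
      fix j :: nat assume j: "j < 3"
      have j3: "j = 0 \<or> j = 1 \<or> j = 2" using j by force
      have "proj3 i ` Ktrip A B C j \<in> {A,B,C}"
        using i3 j3 by (elim disjE; simp only: K012 pr insert_iff simp_thms)
      then show "proj3 i ` Ktrip A B C j \<noteq> carrier T" using pA pB pC by blast
    qed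
    have "card {proj3 i ` Ktrip A B C 0, proj3 i ` Ktrip A B C 1, proj3 i ` Ktrip A B C 2} = 3"
      using i3 by (elim disjE; simp only: K012 pr; simp add: dAB dBC dAC dAB[symmetric] dBC[symmetric] dAC[symmetric])
    then show "card (Fset T (Ktrip A B C) 3 i) = 3" unfolding F .
  qed
  have P9: "cartesian_system (wr3 T) (Mbase T) (stab (wr3 T) (Hsub T A B C))
         (Mbase T \<inter> stab (wr3 T) (Hsub T A B C)) 3 (\<lambda>i. emb3 (Ltrip T (A \<inter> B \<inter> C) i))"
    unfolding cartesian_system_def D_def[symmetric]
  proof (intro conjI allI impI ballI)
    fix i :: nat assume "i < 3"
    show "subgroup (emb3 (Ltrip T D i)) (wr3 T)"
      unfolding Ltrip_def by (simp add: T.emb3_subgroup sD sTT)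
    show "emb3 (Ltrip T D i) \<subseteq> Mbase T"
      unfolding Mb Ltrip_def emb3_def using Dc by auto
  next
    fix g assume "g \<in> stab (wr3 T) (Hsub T A B C)"
    then obtain d1 d2 d3 i where g: "g = ((d1,d2,d3),i)" and dd: "d1 \<in> D" "d2 \<in> D" "d3 \<in> D"
      and i: "i = 0 \<or> i = 1 \<or> i = 2" using stabE by blast
    have dd': "d1 \<in> D" "d1 \<in> carrier T" "d1 \<in> carrier T" "d2 \<in> D" "d2 \<in> carrier T" "d2 \<in> carrier T"
       "d3 \<in> D" "d3 \<in> carrier T" "d3 \<in> carrier T"
      using dd Dc by auto
    have L3: "(\<lambda>i. emb3 (Ltrip T D i)) ` {..<3} = {emb3 (D\<times>carrier T\<times>carrier T), emb3 (carrier T\<times>carrier T\<times>D), emb3 (carrier T\<times>D\<times>carrier T)}"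
      by (auto simp: lessThan_3 Ltrip_def)
    show "(\<lambda>Z. (g <#\<^bsub>wr3 T\<^esub> Z) #>\<^bsub>wr3 T\<^esub> inv\<^bsub>wr3 T\<^esub> g) ` (\<lambda>i. emb3 (Ltrip T D i)) ` {..<3} =
          (\<lambda>i. emb3 (Ltrip T D i)) ` {..<3}"
      unfolding L3 g by (rule T.cyc_invariant[OF sD sTT sTT dd' i])
  next
    show "Mbase T \<inter> (\<Inter>i\<in>{..<3}. emb3 (Ltrip T D i)) = Mbase T \<inter> stab (wr3 T) (Hsub T A B C)"
      unfolding Mw using Dc by (auto simp: Mb lessThan_3 Ltrip_def emb3_def)
  next
    fix i :: nat assume i: "i < 3"
    consider "i = 0" | "i = 1" | "i = 2" using i by force
    then show "emb3 (Ltrip T D i) <#>\<^bsub>wr3 T\<^esub> (Mbase T \<inter> (\<Inter>j\<in>{..<3} - {i}. emb3 (Ltrip T D j))) = Mbase T"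
    proof cases
      case 1
      have e: "(\<Inter>j\<in>{1,2}. emb3 (Ltrip T D j)) = emb3 (carrier T\<times>D\<times>D)"
        by (simp add: Ltrip_def Times_Int_Times Int_absorb1[OF Dc] Int_absorb2[OF Dc])
      have ss: "carrier T\<times>D\<times>D \<subseteq> carrier T \<times> carrier T \<times> carrier T" using Dc by auto
      show ?thesis unfolding 1 diff3 e Icalc[OF ss]
        by (simp add: Ltrip_def T.emb3_set_mult T.set_mult_carrier_r[OF sD] T.set_mult_carrier_l[OF sD] Mb)
    next
      case 2
      have e: "(\<Inter>j\<in>{0,2}. emb3 (Ltrip T D j)) = emb3 (D\<times>carrier T\<times>D)"
        by (simp add: Ltrip_def Times_Int_Times Int_absorb1[OF Dc] Int_absorb2[OF Dc])
      have ss: "D\<times>carrier T\<times>D \<subseteq> carrier T \<times> carrier T \<times> carrier T" using Dc by auto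
      show ?thesis unfolding 2 diff3 e Icalc[OF ss]
        by (simp add: Ltrip_def T.emb3_set_mult T.set_mult_carrier_r[OF sD] T.set_mult_carrier_l[OF sD] Mb)
    next
      case 3
      have e: "(\<Inter>j\<in>{0,1}. emb3 (Ltrip T D j)) = emb3 (D\<times>D\<times>carrier T)"
        by (simp add: Ltrip_def Times_Int_Times Int_absorb1[OF Dc] Int_absorb2[OF Dc])
      have ss: "D\<times>D\<times>carrier T \<subseteq> carrier T \<times> carrier T \<times> carrier T" using Dc by auto
      show ?thesis unfolding 3 diff3 e Icalc[OF ss]
        by (simp add: Ltrip_def T.emb3_set_mult T.set_mult_carrier_r[OF sD] T.set_mult_carrier_l[OF sD] Mb)
    qed
  qed
  have P10: "M_normal (wr3 T) (Mbase T) (Mbase T \<inter> stab (wr3 T) (Hsub T A B C)) 3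
         (\<lambda>i. emb3 (Ltrip T (A \<inter> B \<inter> C) i))"
  proof -
    define E where "E i = emb3 (if i = 0 then carrier T \<times> {\<one>\<^bsub>T\<^esub>} \<times> {\<one>\<^bsub>T\<^esub>}
       else if i = 1 then {\<one>\<^bsub>T\<^esub>} \<times> carrier T \<times> {\<one>\<^bsub>T\<^esub>} else {\<one>\<^bsub>T\<^esub>} \<times> {\<one>\<^bsub>T\<^esub>} \<times> carrier T)" for i :: nat
    have E012: "E 0 = emb3 (carrier T \<times> {\<one>\<^bsub>T\<^esub>} \<times> {\<one>\<^bsub>T\<^esub>})"
      "E 1 = emb3 ({\<one>\<^bsub>T\<^esub>} \<times> carrier T \<times> {\<one>\<^bsub>T\<^esub>})"
      "E 2 = emb3 ({\<one>\<^bsub>T\<^esub>} \<times> {\<one>\<^bsub>T\<^esub>} \<times> carrier T)"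
      "E (Suc 0) = emb3 ({\<one>\<^bsub>T\<^esub>} \<times> carrier T \<times> {\<one>\<^bsub>T\<^esub>})" by (simp_all add: E_def)
    have Esub: "subgroup (E i) (wr3 T)" if ilt3: "i < 3" for i
    proof -
      consider "i = 0" | "i = 1" | "i = 2" using ilt3 by force
      then show ?thesis
      proof cases
        case 1 show ?thesis unfolding 1 E012 by (rule T.emb3_subgroup[OF sTT s1 s1])
      next
        case 2 show ?thesis unfolding 2 E012 by (rule T.emb3_subgroup[OF s1 sTT s1])
      next
        case 3 show ?thesis unfolding 3 E012 by (rule T.emb3_subgroup[OF s1 s1 sTT])
      qed
    qed
    have EM: "E i \<subseteq> Mbase T" for i unfolding E_def Mb emb3_def by auto
    interpret R: group "(wr3 T)\<lparr>carrier := Mbase T\<rparr>" by (rule W.subgroup_imp_group[OF MW])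
    have Enorm: "E i \<lhd> (wr3 T)\<lparr>carrier := Mbase T\<rparr>" if ilt: "i < 3" for i
    proof (subst R.normal_inv_iff, intro conjI ballI)
      show "subgroup (E i) ((wr3 T)\<lparr>carrier := Mbase T\<rparr>)" by (rule W.subgroup_incl[OF Esub[OF ilt] MW EM])
      fix x h assume x: "x \<in> carrier ((wr3 T)\<lparr>carrier := Mbase T\<rparr>)" and h: "h \<in> E i"
      have xM: "x \<in> Mbase T" using x by simp
      then obtain a b c where xx: "x = ((a,b,c),0)" and abc: "a \<in> carrier T" "b \<in> carrier T" "c \<in> carrier T"
        unfolding Mb emb3_def by blast
      obtain p q r where hh: "h = ((p,q,r),0)" and pqr: "p \<in> carrier T" "q \<in> carrier T" "r \<in> carrier T"
        using EM h unfolding Mb emb3_def by blast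
      have "x \<otimes>\<^bsub>wr3 T\<^esub> h \<otimes>\<^bsub>wr3 T\<^esub> inv\<^bsub>wr3 T\<^esub> x = ((a \<otimes>\<^bsub>T\<^esub> p \<otimes>\<^bsub>T\<^esub> inv\<^bsub>T\<^esub> a,
          b \<otimes>\<^bsub>T\<^esub> q \<otimes>\<^bsub>T\<^esub> inv\<^bsub>T\<^esub> b, c \<otimes>\<^bsub>T\<^esub> r \<otimes>\<^bsub>T\<^esub> inv\<^bsub>T\<^esub> c),0)"
        unfolding xx hh using abc by (simp add: T.wr3_inv0)
      moreover have "((a \<otimes>\<^bsub>T\<^esub> p \<otimes>\<^bsub>T\<^esub> inv\<^bsub>T\<^esub> a,
          b \<otimes>\<^bsub>T\<^esub> q \<otimes>\<^bsub>T\<^esub> inv\<^bsub>T\<^esub> b, c \<otimes>\<^bsub>T\<^esub> r \<otimes>\<^bsub>T\<^esub> inv\<^bsub>T\<^esub> c),0) \<in> E i"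
        using h abc pqr unfolding hh E_def emb3_def by (auto split: if_splits)
      ultimately show "x \<otimes>\<^bsub>(wr3 T)\<lparr>carrier := Mbase T\<rparr>\<^esub> h \<otimes>\<^bsub>(wr3 T)\<lparr>carrier := Mbase T\<rparr>\<^esub>
          inv\<^bsub>(wr3 T)\<lparr>carrier := Mbase T\<rparr>\<^esub> x \<in> E i"
        using W.m_inv_consistent[OF MW xM] by simp
    qed
    have ga: "((a,\<one>\<^bsub>T\<^esub>,\<one>\<^bsub>T\<^esub>),0) \<in> generate (wr3 T) U" if "E 0 \<subseteq> U" "a \<in> carrier T" for a U
    proof -
      have "((a,\<one>\<^bsub>T\<^esub>,\<one>\<^bsub>T\<^esub>),0) \<in> E 0" unfolding E012 emb3_def using that(2) by blast
      then show ?thesis using that(1) by (blast intro: generate.incl)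
    qed
    have gb: "((\<one>\<^bsub>T\<^esub>,b,\<one>\<^bsub>T\<^esub>),0) \<in> generate (wr3 T) U" if "E 1 \<subseteq> U" "b \<in> carrier T" for b U
    proof -
      have "((\<one>\<^bsub>T\<^esub>,b,\<one>\<^bsub>T\<^esub>),0) \<in> E 1" unfolding E012 emb3_def using that(2) by blast
      then show ?thesis using that(1) by (blast intro: generate.incl)
    qed
    have gc: "((\<one>\<^bsub>T\<^esub>,\<one>\<^bsub>T\<^esub>,c),0) \<in> generate (wr3 T) U" if "E 2 \<subseteq> U" "c \<in> carrier T" for c U
    proof -
      have "((\<one>\<^bsub>T\<^esub>,\<one>\<^bsub>T\<^esub>,c),0) \<in> E 2" unfolding E012 emb3_def using that(2) by blast
      then show ?thesis using that(1) by (blast intro: generate.incl)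
    qed
    have U3: "(\<Union>i\<in>{..<3}. E i) = E 0 \<union> E 1 \<union> E 2" unfolding lessThan_3 by auto
    have U0: "(\<Union>j\<in>{..<3} - {0}. E j) = E 1 \<union> E 2" unfolding diff3 by auto
    have U1: "(\<Union>j\<in>{..<3} - {1}. E j) = E 0 \<union> E 2" unfolding diff3 by auto
    have U2: "(\<Union>j\<in>{..<3} - {2}. E j) = E 0 \<union> E 1" unfolding diff3 by auto
    have gall: "generate (wr3 T) (\<Union>i\<in>{..<3}. E i) = Mbase T"
      unfolding U3 Mb
    proof (rule T.gen_emb3[OF sTT sTT sTT])
      show "E 0 \<union> E 1 \<union> E 2 \<subseteq> emb3 (carrier T \<times> carrier T \<times> carrier T)" using EM Mb by blast
      fix a b c assume abc: "a \<in> carrier T" "b \<in> carrier T" "c \<in> carrier T"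
      have "((a,\<one>\<^bsub>T\<^esub>,\<one>\<^bsub>T\<^esub>),0) \<otimes>\<^bsub>wr3 T\<^esub> ((\<one>\<^bsub>T\<^esub>,b,\<one>\<^bsub>T\<^esub>),0) \<otimes>\<^bsub>wr3 T\<^esub> ((\<one>\<^bsub>T\<^esub>,\<one>\<^bsub>T\<^esub>,c),0)
          \<in> generate (wr3 T) (E 0 \<union> E 1 \<union> E 2)"
        by (intro generate.eng ga gb gc abc) auto
      then show "((a,b,c),0) \<in> generate (wr3 T) (E 0 \<union> E 1 \<union> E 2)" using abc by simp
    qed
    have g0: "generate (wr3 T) (\<Union>j\<in>{..<3} - {0}. E j) = emb3 ({\<one>\<^bsub>T\<^esub>} \<times> carrier T \<times> carrier T)"
      unfolding U0
    proof (rule T.gen_emb3[OF s1 sTT sTT])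
      show "E 1 \<union> E 2 \<subseteq> emb3 ({\<one>\<^bsub>T\<^esub>} \<times> carrier T \<times> carrier T)" by (auto simp: E012 emb3_def)
      fix a b c assume abc: "a \<in> {\<one>\<^bsub>T\<^esub>}" "b \<in> carrier T" "c \<in> carrier T"
      have "((\<one>\<^bsub>T\<^esub>,b,\<one>\<^bsub>T\<^esub>),0) \<otimes>\<^bsub>wr3 T\<^esub> ((\<one>\<^bsub>T\<^esub>,\<one>\<^bsub>T\<^esub>,c),0)
          \<in> generate (wr3 T) (E 1 \<union> E 2)"
        by (intro generate.eng gb gc abc) auto
      then show "((a,b,c),0) \<in> generate (wr3 T) (E 1 \<union> E 2)" using abc by simp
    qed
    have g1: "generate (wr3 T) (\<Union>j\<in>{..<3} - {1}. E j) = emb3 (carrier T \<times> {\<one>\<^bsub>T\<^esub>} \<times> carrier T)"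
      unfolding U1
    proof (rule T.gen_emb3[OF sTT s1 sTT])
      show "E 0 \<union> E 2 \<subseteq> emb3 (carrier T \<times> {\<one>\<^bsub>T\<^esub>} \<times> carrier T)" by (auto simp: E012 emb3_def)
      fix a b c assume abc: "a \<in> carrier T" "b \<in> {\<one>\<^bsub>T\<^esub>}" "c \<in> carrier T"
      have "((a,\<one>\<^bsub>T\<^esub>,\<one>\<^bsub>T\<^esub>),0) \<otimes>\<^bsub>wr3 T\<^esub> ((\<one>\<^bsub>T\<^esub>,\<one>\<^bsub>T\<^esub>,c),0)
          \<in> generate (wr3 T) (E 0 \<union> E 2)"
        by (intro generate.eng ga gc abc) auto
      then show "((a,b,c),0) \<in> generate (wr3 T) (E 0 \<union> E 2)" using abc by simp
    qed
    have g2: "generate (wr3 T) (\<Union>j\<in>{..<3} - {2}. E j) = emb3 (carrier T \<times> carrier T \<times> {\<one>\<^bsub>T\<^esub>})"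
      unfolding U2
    proof (rule T.gen_emb3[OF sTT sTT s1])
      show "E 0 \<union> E 1 \<subseteq> emb3 (carrier T \<times> carrier T \<times> {\<one>\<^bsub>T\<^esub>})" by (auto simp: E012 emb3_def)
      fix a b c assume abc: "a \<in> carrier T" "b \<in> carrier T" "c \<in> {\<one>\<^bsub>T\<^esub>}"
      have "((a,\<one>\<^bsub>T\<^esub>,\<one>\<^bsub>T\<^esub>),0) \<otimes>\<^bsub>wr3 T\<^esub> ((\<one>\<^bsub>T\<^esub>,b,\<one>\<^bsub>T\<^esub>),0)
          \<in> generate (wr3 T) (E 0 \<union> E 1)"
        by (intro generate.eng ga gb abc) auto
      then show "((a,b,c),0) \<in> generate (wr3 T) (E 0 \<union> E 1)" using abc by simp
    qed
    have o1: "{\<one>\<^bsub>T\<^esub>} \<inter> D = {\<one>\<^bsub>T\<^esub>}" "D \<inter> {\<one>\<^bsub>T\<^esub>} = {\<one>\<^bsub>T\<^esub>}" using one(4) by auto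
    have o2: "carrier T \<inter> D = D" "D \<inter> carrier T = D" using Dc by auto
    have o3: "carrier T \<inter> {\<one>\<^bsub>T\<^esub>} = {\<one>\<^bsub>T\<^esub>}" "{\<one>\<^bsub>T\<^esub>} \<inter> carrier T = {\<one>\<^bsub>T\<^esub>}" by auto
    note sm = T.set_mult_one_r[OF Dc] T.set_mult_one_l[OF Dc] T.set_mult_one_r[OF order_refl] T.set_mult_one_l[OF order_refl]
      T.emb3_set_mult
    show ?thesis
      unfolding M_normal_def D_def[symmetric] Mw
    proof (intro exI[of _ E] conjI allI impI)
      fix i :: nat assume "i < 3"
      then show "E i \<lhd> (wr3 T)\<lparr>carrier := Mbase T\<rparr>" by (rule Enorm)
    next
      show "generate (wr3 T) (\<Union>i\<in>{..<3}. E i) = Mbase T" by (rule gall)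
    next
      fix i :: nat assume i: "i < 3"
      consider "i = 0" | "i = 1" | "i = 2" using i by force
      then show "E i \<inter> generate (wr3 T) (\<Union>j\<in>{..<3} - {i}. E j) = {\<one>\<^bsub>wr3 T\<^esub>}"
      proof cases
        case 1 show ?thesis unfolding 1 g0 by (auto simp: E012 emb3_def)
      next
        case 2 show ?thesis unfolding 2 g1 by (auto simp: E012 emb3_def)
      next
        case 3 show ?thesis unfolding 3 g2 by (auto simp: E012 emb3_def)
      qed
    next
      fix i :: nat assume i: "i < 3"
      have L012: "Ltrip T D 0 = D \<times> carrier T \<times> carrier T" "Ltrip T D 1 = carrier T \<times> D \<times> carrier T"
        "Ltrip T D 2 = carrier T \<times> carrier T \<times> D" by (simp_all add: Ltrip_def)
      have a: "E 0 \<inter> emb3 (D \<times> D \<times> D) = emb3 (D \<times> {\<one>\<^bsub>T\<^esub>} \<times> {\<one>\<^bsub>T\<^esub>})"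
        "E 1 \<inter> emb3 (D \<times> D \<times> D) = emb3 ({\<one>\<^bsub>T\<^esub>} \<times> D \<times> {\<one>\<^bsub>T\<^esub>})"
        "E 2 \<inter> emb3 (D \<times> D \<times> D) = emb3 ({\<one>\<^bsub>T\<^esub>} \<times> {\<one>\<^bsub>T\<^esub>} \<times> D)"
        unfolding E012 emb3_Int by (rule arg_cong[where f=emb3], use Dc one(4) in blast)+
      consider "i = 0" | "i = 1" | "i = 2" using i by force
      then show "emb3 (Ltrip T D i) = (E i \<inter> emb3 (D \<times> D \<times> D)) <#>\<^bsub>wr3 T\<^esub> generate (wr3 T) (\<Union>j\<in>{..<3} - {i}. E j)"
      proof cases
        case 1 show ?thesis unfolding 1 by (simp only: L012 a g0 sm)
      next
        case 2 show ?thesis unfolding 2 by (simp only: L012 a g1 sm)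
      next
        case 3 show ?thesis unfolding 3 by (simp only: L012 a g2 sm)
      qed
    qed
  qed
  show ?thesis by (intro conjI P1 P2 W.is_group Hs P3 minimal P5 P6 P7 P8 P9 P10)
qed

end
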